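(* In $L_2(\mathbb R)$ let $Df(x)=\sqrt2 f(2x)$ and $Tf(x)=f(x-1)$, and let $A=i(D+I)(D-I)^{-1}$ (a self-adjoint operator). Let $S$ be a simple Phillips symmetric operator which is a restriction of $A$, and let $\psi\in\mathfrak N_{-i}=\ker(S^*+iI)$ be such that $\{T^k\psi\}_{k\in\mathbb Z}$ is an orthonormal basis of $\mathfrak N_{-i}$. Then $\psi$ is a wavelet, i.e. $\{D^jT^k\psi\}_{j,k\in\mathbb Z}=\{2^{j/2}\psi(2^jx-k)\}_{j,k\in\mathbb Z}$ is an orthonormal basis of $L_2(\mathbb R)$.
   Context: A closed densely defined symmetric operator $S$ with equal nonzero defect numbers is a Phillips symmetric operator (PSO) if its characteristic function is constant on $\mathbb C_+$, where for a boundary triplet $(\mathcal H,\Gamma_-,\Gamma_+)$ of $S^*$ ($\Gamma_\pm:\mathcal D(S^* )\to\mathcal H$ linear, $(S^*f,g)-(f,S^*g)=i[(\Gamma_+f,\Gamma_+g)-(\Gamma_-f,\Gamma_-g)]$, $(\Gamma_-,\Gamma_+)$ onto $\mathcal H\oplus\mathcal H$) the characteristic function is the bounded $\Theta(\lambda)$ with $\mathcal D(S)\dotplus\ker(S^*-\lambda I)=\{f\in\mathcal D(S^* ):\Theta(\lambda)\Gamma_+f=\Gamma_-f\}$, $\lambda\in\mathbb C_+$. Simple: no nontrivial reducing subspace on which the restriction is self-adjoint. *)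

theory Defs
  imports "HOL-Analysis.Analysis"
begin

text \<open>Elements of L_2(R) are represented by square-integrable Borel functions
  real => complex; equality in L_2 is equality almost everywhere (aeq).
  Possibly unbounded linear operators are represented by their graphs.\<close>

type_synonym cfun = "real \<Rightarrow> complex"

definition L2 :: "cfun set" where
  "L2 = {f. f \<in> borel_measurable lborel \<and> integrable lborel (\<lambda>x. (cmod (f x))^2)}"

definition aeq :: "cfun \<Rightarrow> cfun \<Rightarrow> bool" where
  "aeq f g \<longleftrightarrow> (AE x in lborel. f x = g x)"

definition l2_inner :: "cfun \<Rightarrow> cfun \<Rightarrow> complex" where
  "l2_inner f g = integral\<^sup>L lborel (\<lambda>x. f x * cnj (g x))"

definition l2_norm :: "cfun \<Rightarrow> real" where
  "l2_norm f = sqrt (integral\<^sup>L lborel (\<lambda>x. (cmod (f x))^2))"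

definition l2_conv :: "(nat \<Rightarrow> cfun) \<Rightarrow> cfun \<Rightarrow> bool" where
  "l2_conv fs f \<longleftrightarrow> (\<lambda>n. l2_norm (\<lambda>x. fs n x - f x)) \<longlonglongrightarrow> 0"

definition l2_subspace :: "cfun set \<Rightarrow> bool" where
  "l2_subspace M \<longleftrightarrow> M \<subseteq> L2 \<and> (\<lambda>x. 0) \<in> M
     \<and> (\<forall>f\<in>M. \<forall>g\<in>M. (\<lambda>x. f x + g x) \<in> M)
     \<and> (\<forall>c. \<forall>f\<in>M. (\<lambda>x. c * f x) \<in> M)
     \<and> (\<forall>f\<in>M. \<forall>g\<in>L2. aeq f g \<longrightarrow> g \<in> M)"

definition closed_l2_subspace :: "cfun set \<Rightarrow> bool" where
  "closed_l2_subspace M \<longleftrightarrow> l2_subspace M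
     \<and> (\<forall>fs f. (\<forall>n. fs n \<in> M) \<and> f \<in> L2 \<and> l2_conv fs f \<longrightarrow> f \<in> M)"

definition l2_orth :: "cfun set \<Rightarrow> cfun set" where
  "l2_orth M = {g \<in> L2. \<forall>f\<in>M. l2_inner f g = 0}"

definition onb_family :: "cfun set \<Rightarrow> 'k set \<Rightarrow> ('k \<Rightarrow> cfun) \<Rightarrow> bool" where
  "onb_family M I e \<longleftrightarrow> (\<forall>k\<in>I. e k \<in> M)
     \<and> (\<forall>k\<in>I. \<forall>l\<in>I. l2_inner (e k) (e l) = (if k = l then 1 else 0))
     \<and> (\<forall>g\<in>M. \<forall>\<epsilon>>0. \<exists>F c. finite F \<and> F \<subseteq> I
            \<and> l2_norm (\<lambda>x. g x - (\<Sum>k\<in>F. c k * e k x)) < \<epsilon>)"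

definition l2_op :: "(cfun \<times> cfun) set \<Rightarrow> bool" where
  "l2_op G \<longleftrightarrow> G \<subseteq> L2 \<times> L2 \<and> ((\<lambda>x. 0), (\<lambda>x. 0)) \<in> G
     \<and> (\<forall>(f,h)\<in>G. \<forall>(g,k)\<in>G. ((\<lambda>x. f x + g x), (\<lambda>x. h x + k x)) \<in> G)
     \<and> (\<forall>c. \<forall>(f,h)\<in>G. ((\<lambda>x. c * f x), (\<lambda>x. c * h x)) \<in> G)
     \<and> (\<forall>(f,h)\<in>G. \<forall>f'\<in>L2. \<forall>h'\<in>L2. aeq f f' \<and> aeq h h' \<longrightarrow> (f',h') \<in> G)
     \<and> (\<forall>(f,h)\<in>G. aeq f (\<lambda>x. 0) \<longrightarrow> aeq h (\<lambda>x. 0))"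

definition densely_defined :: "(cfun \<times> cfun) set \<Rightarrow> bool" where
  "densely_defined G \<longleftrightarrow> (\<forall>g\<in>L2. \<forall>\<epsilon>>0. \<exists>f\<in>Domain G. l2_norm (\<lambda>x. f x - g x) < \<epsilon>)"

definition closed_op :: "(cfun \<times> cfun) set \<Rightarrow> bool" where
  "closed_op G \<longleftrightarrow> (\<forall>fs hs f h. (\<forall>n. (fs n, hs n) \<in> G) \<and> f \<in> L2 \<and> h \<in> L2
      \<and> l2_conv fs f \<and> l2_conv hs h \<longrightarrow> (f, h) \<in> G)"

definition adjoint_op :: "(cfun \<times> cfun) set \<Rightarrow> (cfun \<times> cfun) set" where
  "adjoint_op G = {(g,k). g \<in> L2 \<and> k \<in> L2 \<and> (\<forall>(f,h)\<in>G. l2_inner h g = l2_inner f k)}"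

definition symmetric_op :: "(cfun \<times> cfun) set \<Rightarrow> bool" where
  "symmetric_op G \<longleftrightarrow> G \<subseteq> adjoint_op G"

definition defect_space :: "(cfun \<times> cfun) set \<Rightarrow> complex \<Rightarrow> cfun set" where
  "defect_space G \<mu> = {g. (g, (\<lambda>x. \<mu> * g x)) \<in> adjoint_op G}"

definition equal_nonzero_defect :: "(cfun \<times> cfun) set \<Rightarrow> bool" where
  "equal_nonzero_defect G \<longleftrightarrow> (\<exists>B1 B2. onb_family (defect_space G \<i>) B1 id
      \<and> onb_family (defect_space G (- \<i>)) B2 id \<and> B1 \<noteq> {} \<and> (\<exists>\<phi>. bij_betw \<phi> B1 B2))"

definition l2seq :: "('i \<Rightarrow> complex) set" where
  "l2seq = {v. (\<lambda>i. (cmod (v i))^2) summable_on UNIV}"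

definition seq_inner :: "('i \<Rightarrow> complex) \<Rightarrow> ('i \<Rightarrow> complex) \<Rightarrow> complex" where
  "seq_inner v w = (\<Sum>\<^sub>\<infinity>i. v i * cnj (w i))"

definition seq_norm :: "('i \<Rightarrow> complex) \<Rightarrow> real" where
  "seq_norm v = sqrt (\<Sum>\<^sub>\<infinity>i. (cmod (v i))^2)"

definition bounded_seq_op :: "(('i \<Rightarrow> complex) \<Rightarrow> ('i \<Rightarrow> complex)) \<Rightarrow> bool" where
  "bounded_seq_op \<Theta> \<longleftrightarrow> (\<forall>v\<in>l2seq. \<Theta> v \<in> l2seq)
     \<and> (\<forall>v\<in>l2seq. \<forall>w\<in>l2seq. \<Theta> (\<lambda>i. v i + w i) = (\<lambda>i. \<Theta> v i + \<Theta> w i))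
     \<and> (\<forall>c. \<forall>v\<in>l2seq. \<Theta> (\<lambda>i. c * v i) = (\<lambda>i. c * \<Theta> v i))
     \<and> (\<exists>C. \<forall>v\<in>l2seq. seq_norm (\<Theta> v) \<le> C * seq_norm v)"

definition boundary_triplet :: "(cfun \<times> cfun) set \<Rightarrow> (cfun \<Rightarrow> 'i \<Rightarrow> complex)
    \<Rightarrow> (cfun \<Rightarrow> 'i \<Rightarrow> complex) \<Rightarrow> bool" where
  "boundary_triplet S Gm Gp \<longleftrightarrow>
     (\<forall>f\<in>Domain (adjoint_op S). Gm f \<in> l2seq \<and> Gp f \<in> l2seq)
   \<and> (\<forall>f\<in>Domain (adjoint_op S). \<forall>g\<in>Domain (adjoint_op S).
        Gm (\<lambda>x. f x + g x) = (\<lambda>i. Gm f i + Gm g i) \<and> Gp (\<lambda>x. f x + g x) = (\<lambda>i. Gp f i + Gp g i))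
   \<and> (\<forall>c. \<forall>f\<in>Domain (adjoint_op S).
        Gm (\<lambda>x. c * f x) = (\<lambda>i. c * Gm f i) \<and> Gp (\<lambda>x. c * f x) = (\<lambda>i. c * Gp f i))
   \<and> (\<forall>f\<in>Domain (adjoint_op S). aeq f (\<lambda>x. 0) \<longrightarrow> Gm f = (\<lambda>i. 0) \<and> Gp f = (\<lambda>i. 0))
   \<and> (\<forall>(f,h)\<in>adjoint_op S. \<forall>(g,k)\<in>adjoint_op S.
        l2_inner h g - l2_inner f k = \<i> * (seq_inner (Gp f) (Gp g) - seq_inner (Gm f) (Gm g)))
   \<and> (\<forall>u\<in>l2seq. \<forall>v\<in>l2seq. \<exists>f\<in>Domain (adjoint_op S). Gm f = u \<and> Gp f = v)"

definition is_char_fun_value :: "(cfun \<times> cfun) set \<Rightarrow> (cfun \<Rightarrow> 'i \<Rightarrow> complex)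
    \<Rightarrow> (cfun \<Rightarrow> 'i \<Rightarrow> complex) \<Rightarrow> complex \<Rightarrow> (('i \<Rightarrow> complex) \<Rightarrow> ('i \<Rightarrow> complex)) \<Rightarrow> bool" where
  "is_char_fun_value S Gm Gp \<mu> \<Theta> \<longleftrightarrow> bounded_seq_op \<Theta>
     \<and> {f \<in> L2. \<exists>g h. g \<in> Domain S \<and> h \<in> defect_space S \<mu> \<and> aeq f (\<lambda>x. g x + h x)}
       = {f \<in> Domain (adjoint_op S). \<Theta> (Gp f) = Gm f}"

definition phillips_symmetric :: "(cfun \<times> cfun) set \<Rightarrow> (cfun \<Rightarrow> 'i \<Rightarrow> complex)
    \<Rightarrow> (cfun \<Rightarrow> 'i \<Rightarrow> complex) \<Rightarrow> bool" where
  "phillips_symmetric S Gm Gp \<longleftrightarrow> l2_op S \<and> closed_op S \<and> densely_defined S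
     \<and> symmetric_op S \<and> equal_nonzero_defect S \<and> boundary_triplet S Gm Gp
     \<and> (\<exists>\<Theta>. \<forall>\<mu>. Im \<mu> > 0 \<longrightarrow> is_char_fun_value S Gm Gp \<mu> \<Theta>)"

definition reduces :: "(cfun \<times> cfun) set \<Rightarrow> cfun set \<Rightarrow> bool" where
  "reduces S M \<longleftrightarrow> closed_l2_subspace M \<and> (\<forall>(f,h)\<in>S. \<forall>f1 f2. f1 \<in> M \<and> f2 \<in> l2_orth M
      \<and> aeq f (\<lambda>x. f1 x + f2 x) \<longrightarrow>
      (\<exists>h1 h2. (f1,h1) \<in> S \<and> h1 \<in> M \<and> (f2,h2) \<in> S \<and> h2 \<in> l2_orth M))"

definition selfadjoint_in :: "cfun set \<Rightarrow> (cfun \<times> cfun) set \<Rightarrow> bool" where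
  "selfadjoint_in M G \<longleftrightarrow>
     G = {(g,k). g \<in> M \<and> k \<in> M \<and> (\<forall>(f,h)\<in>G. l2_inner h g = l2_inner f k)}"

definition simple_op :: "(cfun \<times> cfun) set \<Rightarrow> bool" where
  "simple_op S \<longleftrightarrow> \<not> (\<exists>M. reduces S M \<and> (\<exists>f\<in>M. \<not> aeq f (\<lambda>x. 0))
                          \<and> selfadjoint_in M (S \<inter> (M \<times> M)))"

definition Dil :: "cfun \<Rightarrow> cfun" where
  "Dil f = (\<lambda>x. complex_of_real (sqrt 2) * f (2 * x))"

definition Dpow :: "int \<Rightarrow> cfun \<Rightarrow> cfun" where
  "Dpow j f = (\<lambda>x. complex_of_real (2 powr (real_of_int j / 2)) * f (2 powr real_of_int j * x))"

definition Tpow :: "int \<Rightarrow> cfun \<Rightarrow> cfun" where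
  "Tpow k f = (\<lambda>x. f (x - real_of_int k))"

definition A_graph :: "(cfun \<times> cfun) set" where
  "A_graph = {(f,h). f \<in> L2 \<and> h \<in> L2 \<and> (\<exists>g\<in>L2. aeq f (\<lambda>x. Dil g x - g x)
                \<and> aeq h (\<lambda>x. \<i> * (Dil g x + g x)))}"

end

theory Submission
  imports Defs
begin


lemma borel_measurable_cnj'[measurable (raw)]:
  "f \<in> borel_measurable M \<Longrightarrow> (\<lambda>x. cnj (f x)) \<in> borel_measurable M"
  by (rule borel_measurable_continuous_on[where f=cnj]) (auto intro: continuous_intros)

lemma L2D: assumes "f \<in> L2" shows "f \<in> borel_measurable lborel" "integrable lborel (\<lambda>x. (cmod (f x))^2)"
  using assms by (auto simp: L2_def)

lemma L2I: "f \<in> borel_measurable lborel \<Longrightarrow> integrable lborel (\<lambda>x. (cmod (f x))^2) \<Longrightarrow> f \<in> L2"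
  by (auto simp: L2_def)

lemma L2_prod_int: assumes "f \<in> L2" "g \<in> L2"
  shows "integrable lborel (\<lambda>x. f x * cnj (g x))"
proof (rule Bochner_Integration.integrable_bound[where f="\<lambda>x. (cmod (f x))^2 + (cmod (g x))^2"])
  note [measurable] = L2D(1)[OF assms(1)] L2D(1)[OF assms(2)]
  show "integrable lborel (\<lambda>x. (cmod (f x))^2 + (cmod (g x))^2)"
    using L2D(2)[OF assms(1)] L2D(2)[OF assms(2)] by auto
  show "(\<lambda>x. f x * cnj (g x)) \<in> borel_measurable lborel" by measurable
  show "AE x in lborel. norm (f x * cnj (g x)) \<le> norm ((cmod (f x))^2 + (cmod (g x))^2)"
  proof (rule AE_I2)
    fix x
    have "cmod (f x) * cmod (g x) \<le> (cmod (f x))^2 + (cmod (g x))^2"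
      by (smt (verit) mult_le_cancel_left power2_eq_square norm_ge_zero zero_le_power2 mult_right_mono)
    then show "norm (f x * cnj (g x)) \<le> norm ((cmod (f x))^2 + (cmod (g x))^2)"
      by (simp add: norm_mult)
  qed
qed

lemma L2_add: assumes "f \<in> L2" "g \<in> L2" shows "(\<lambda>x. f x + g x) \<in> L2"
proof (rule L2I)
  note [measurable] = L2D(1)[OF assms(1)] L2D(1)[OF assms(2)]
  show "(\<lambda>x. f x + g x) \<in> borel_measurable lborel" by measurable
  show "integrable lborel (\<lambda>x. (cmod (f x + g x))^2)"
  proof (rule Bochner_Integration.integrable_bound[where f="\<lambda>x. 2 * (cmod (f x))^2 + 2 * (cmod (g x))^2"])
    show "integrable lborel (\<lambda>x. 2 * (cmod (f x))^2 + 2 * (cmod (g x))^2)"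
      using L2D(2)[OF assms(1)] L2D(2)[OF assms(2)] by auto
    show "(\<lambda>x. (cmod (f x + g x))^2) \<in> borel_measurable lborel" by measurable
    show "AE x in lborel. norm ((cmod (f x + g x))^2) \<le> norm (2 * (cmod (f x))^2 + 2 * (cmod (g x))^2)"
    proof (rule AE_I2)
      fix x
      have t: "cmod (f x + g x) \<le> cmod (f x) + cmod (g x)" by (rule norm_triangle_ineq)
      have "(cmod (f x + g x))^2 \<le> (cmod (f x) + cmod (g x))^2"
        using t by (simp add: power_mono)
      also have "\<dots> \<le> 2 * (cmod (f x))^2 + 2 * (cmod (g x))^2"
        by (smt (verit) power2_sum sum_squares_bound)
      finally show "norm ((cmod (f x + g x))^2) \<le> norm (2 * (cmod (f x))^2 + 2 * (cmod (g x))^2)"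
        by simp
    qed
  qed
qed

lemma L2_scale: assumes "f \<in> L2" shows "(\<lambda>x. c * f x) \<in> L2"
proof (rule L2I)
  note [measurable] = L2D(1)[OF assms(1)]
  show "(\<lambda>x. c * f x) \<in> borel_measurable lborel" by measurable
  have "integrable lborel (\<lambda>x. (cmod c)^2 * (cmod (f x))^2)"
    using L2D(2)[OF assms(1)] by auto
  then show "integrable lborel (\<lambda>x. (cmod (c * f x))^2)"
    by (simp add: norm_mult power_mult_distrib)
qed

lemma L2_zero: "(\<lambda>x. 0) \<in> L2"
  by (rule L2I) auto

lemma L2_minus: assumes "f \<in> L2" shows "(\<lambda>x. - f x) \<in> L2"
  using L2_scale[OF assms, of "-1"] by simp

lemma L2_diff: assumes "f \<in> L2" "g \<in> L2" shows "(\<lambda>x. f x - g x) \<in> L2"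
  using L2_add[OF assms(1) L2_minus[OF assms(2)]] by simp

lemma L2_sum: assumes "\<And>k. k \<in> F \<Longrightarrow> e k \<in> L2"
  shows "(\<lambda>x. \<Sum>k\<in>F. c k * e k x) \<in> L2"
  using assms
proof (induction F rule: infinite_finite_induct)
  case (infinite A) then show ?case by (simp add: L2_zero)
next
  case empty then show ?case by (simp add: L2_zero)
next
  case (insert a A)
  then show ?case using L2_add[OF L2_scale[of "e a" "c a"], of "\<lambda>x. \<Sum>k\<in>A. c k * e k x"] by simp
qed

lemma L2_aeq: assumes "f \<in> L2" "g \<in> borel_measurable lborel" "aeq f g" shows "g \<in> L2"
proof (rule L2I)
  show "g \<in> borel_measurable lborel" by fact
  have "AE x in lborel. (cmod (f x))^2 = (cmod (g x))^2" using assms(3) unfolding aeq_def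
    by eventually_elim simp
  then show "integrable lborel (\<lambda>x. (cmod (g x))^2)"
    using L2D(2)[OF assms(1)] integrable_cong_AE[of "\<lambda>x. (cmod (f x))^2" lborel "\<lambda>x. (cmod (g x))^2"]
      L2D(1)[OF assms(1)] assms(2) by auto
qed

lemma aeq_refl[simp]: "aeq f f" by (simp add: aeq_def)
lemma aeq_sym: "aeq f g \<Longrightarrow> aeq g f" unfolding aeq_def by (auto elim: AE_mp)
lemma aeq_trans: "aeq f g \<Longrightarrow> aeq g h \<Longrightarrow> aeq f h" unfolding aeq_def
  by (erule AE_mp, erule AE_mp) auto

lemma aeq_cong_add: "aeq f f' \<Longrightarrow> aeq g g' \<Longrightarrow> aeq (\<lambda>x. f x + g x) (\<lambda>x. f' x + g' x)"
  unfolding aeq_def by (erule AE_mp, erule AE_mp) auto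
lemma aeq_cong_scale: "aeq f f' \<Longrightarrow> aeq (\<lambda>x. c * f x) (\<lambda>x. c * f' x)"
  unfolding aeq_def by (erule AE_mp) auto
lemma aeq_pointwise: "(\<And>x. f x = g x) \<Longrightarrow> aeq f g" by (simp add: aeq_def)

lemma ip_add_left: "f \<in> L2 \<Longrightarrow> g \<in> L2 \<Longrightarrow> h \<in> L2 \<Longrightarrow>
  l2_inner (\<lambda>x. f x + g x) h = l2_inner f h + l2_inner g h"
  unfolding l2_inner_def by (simp add: distrib_right Bochner_Integration.integral_add L2_prod_int)

lemma ip_add_right: "f \<in> L2 \<Longrightarrow> g \<in> L2 \<Longrightarrow> h \<in> L2 \<Longrightarrow>
  l2_inner h (\<lambda>x. f x + g x) = l2_inner h f + l2_inner h g"
  unfolding l2_inner_def by (simp add: distrib_left Bochner_Integration.integral_add L2_prod_int)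

lemma ip_scale_left: "l2_inner (\<lambda>x. c * f x) g = c * l2_inner f g"
  unfolding l2_inner_def by (simp add: mult.assoc)

lemma ip_scale_right: "l2_inner g (\<lambda>x. c * f x) = cnj c * l2_inner g f"
  unfolding l2_inner_def by (simp add: mult.left_commute)

lemma ip_cnj: "l2_inner g f = cnj (l2_inner f g)"
proof -
  have "cnj (l2_inner f g) = integral\<^sup>L lborel (\<lambda>x. cnj (f x * cnj (g x)))"
    unfolding l2_inner_def by (rule Bochner_Integration.integral_cnj[symmetric])
  then show ?thesis by (simp add: l2_inner_def mult.commute)
qed

lemma ip_diff_left: "f \<in> L2 \<Longrightarrow> g \<in> L2 \<Longrightarrow> h \<in> L2 \<Longrightarrow>
  l2_inner (\<lambda>x. f x - g x) h = l2_inner f h - l2_inner g h"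
  unfolding l2_inner_def by (simp add: left_diff_distrib Bochner_Integration.integral_diff L2_prod_int)

lemma ip_diff_right: "f \<in> L2 \<Longrightarrow> g \<in> L2 \<Longrightarrow> h \<in> L2 \<Longrightarrow>
  l2_inner h (\<lambda>x. f x - g x) = l2_inner h f - l2_inner h g"
  unfolding l2_inner_def by (simp add: right_diff_distrib Bochner_Integration.integral_diff L2_prod_int)

lemma ip_zero_left[simp]: "l2_inner (\<lambda>x. 0) g = 0" by (simp add: l2_inner_def)
lemma ip_zero_right[simp]: "l2_inner g (\<lambda>x. 0) = 0" by (simp add: l2_inner_def)

lemma ip_aeq_left: assumes "f \<in> L2" "f' \<in> L2" "g \<in> L2" "aeq f f'"
  shows "l2_inner f g = l2_inner f' g"
  unfolding l2_inner_def
proof (rule integral_cong_AE)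
  show "(\<lambda>x. f x * cnj (g x)) \<in> borel_measurable lborel" using L2_prod_int[OF assms(1,3)] by auto
  show "(\<lambda>x. f' x * cnj (g x)) \<in> borel_measurable lborel" using L2_prod_int[OF assms(2,3)] by auto
  show "AE x in lborel. f x * cnj (g x) = f' x * cnj (g x)" using assms(4) unfolding aeq_def
    by eventually_elim simp
qed

lemma ip_aeq_right: assumes "f \<in> L2" "f' \<in> L2" "g \<in> L2" "aeq f f'"
  shows "l2_inner g f = l2_inner g f'"
  using ip_aeq_left[OF assms] by (metis ip_cnj)

lemma ip_self: assumes "f \<in> L2" shows "l2_inner f f = complex_of_real ((l2_norm f)^2)"
proof -
  have e: "(\<lambda>x. f x * cnj (f x)) = (\<lambda>x. complex_of_real ((cmod (f x))^2))"
    by (rule ext) (metis complex_norm_square)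
  have "integral\<^sup>L lborel (\<lambda>x. (cmod (f x))^2) \<ge> 0" by simp
  then show ?thesis unfolding l2_inner_def l2_norm_def e integral_complex_of_real by simp
qed

lemma l2_norm_nonneg[simp]: "l2_norm f \<ge> 0" by (simp add: l2_norm_def)

lemma l2_norm_sq: "(l2_norm f)^2 = integral\<^sup>L lborel (\<lambda>x. (cmod (f x))^2)"
  unfolding l2_norm_def by simp

lemma l2_norm_zero_iff: assumes "f \<in> L2" shows "l2_norm f = 0 \<longleftrightarrow> aeq f (\<lambda>x. 0)"
proof -
  have "l2_norm f = 0 \<longleftrightarrow> integral\<^sup>L lborel (\<lambda>x. (cmod (f x))^2) = 0"
    unfolding l2_norm_def by simp
  also have "\<dots> \<longleftrightarrow> (AE x in lborel. (cmod (f x))^2 = 0)"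
    using L2D(2)[OF assms] by (intro integral_nonneg_eq_0_iff_AE) auto
  also have "\<dots> \<longleftrightarrow> aeq f (\<lambda>x. 0)" by (simp add: aeq_def)
  finally show ?thesis .
qed

lemma ip_self_zero: "f \<in> L2 \<Longrightarrow> l2_inner f f = 0 \<Longrightarrow> aeq f (\<lambda>x. 0)"
  using ip_self l2_norm_zero_iff by fastforce

lemma l2_norm_aeq: assumes "f \<in> L2" "g \<in> L2" "aeq f g" shows "l2_norm f = l2_norm g"
proof -
  have "l2_inner f f = l2_inner g g"
    using ip_aeq_left[OF assms(1,2) assms(1) assms(3)] ip_aeq_right[OF assms(1,2) assms(2) assms(3)] by simp
  then have "(l2_norm f)^2 = (l2_norm g)^2" using ip_self assms by (metis of_real_eq_iff)
  then show ?thesis by (simp add: power2_eq_iff_nonneg)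
qed

lemma l2_norm_scale: "l2_norm (\<lambda>x. c * f x) = cmod c * l2_norm f"
proof -
  have "integral\<^sup>L lborel (\<lambda>x. (cmod (c * f x))^2) = (cmod c)^2 * integral\<^sup>L lborel (\<lambda>x. (cmod (f x))^2)"
    by (simp add: norm_mult power_mult_distrib)
  then show ?thesis unfolding l2_norm_def by (simp add: real_sqrt_mult)
qed


lemma norm_sq_Re: "f \<in> L2 \<Longrightarrow> (l2_norm f)^2 = Re (l2_inner f f)"
  by (simp add: ip_self)

lemma amgm_aux: fixes t a b :: real assumes "t > 0" shows "a * b \<le> (t * a^2 + b^2 / t) / 2"
proof -
  have "0 \<le> (t * a - b)^2" by simp
  then have "2 * t * (a * b) \<le> t^2 * a^2 + b^2" by (simp add: power2_eq_square algebra_simps)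
  then have "2 * t * (a * b) \<le> t * (t * a^2 + b^2 / t)" using assms
    by (simp add: power2_eq_square algebra_simps)
  then show ?thesis using assms by (simp add: mult.assoc)
qed

lemma CS_param: assumes "f \<in> L2" "g \<in> L2" "t > 0"
  shows "cmod (l2_inner f g) \<le> (t * (l2_norm f)^2 + (l2_norm g)^2 / t) / 2"
proof -
  note [measurable] = L2D(1)[OF assms(1)] L2D(1)[OF assms(2)]
  have i1: "integrable lborel (\<lambda>x. f x * cnj (g x))" by (rule L2_prod_int[OF assms(1,2)])
  have "cmod (l2_inner f g) \<le> integral\<^sup>L lborel (\<lambda>x. norm (f x * cnj (g x)))"
    unfolding l2_inner_def by (rule integral_norm_bound)
  also have "\<dots> \<le> integral\<^sup>L lborel (\<lambda>x. (t * (cmod (f x))^2 + (cmod (g x))^2 / t) / 2)"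
  proof (rule integral_mono)
    show "integrable lborel (\<lambda>x. norm (f x * cnj (g x)))" using i1 by auto
    show "integrable lborel (\<lambda>x. (t * (cmod (f x))^2 + (cmod (g x))^2 / t) / 2)"
      using L2D(2)[OF assms(1)] L2D(2)[OF assms(2)] by auto
    fix x show "norm (f x * cnj (g x)) \<le> (t * (cmod (f x))^2 + (cmod (g x))^2 / t) / 2"
      using amgm_aux[OF assms(3), of "cmod (f x)" "cmod (g x)"] by (simp add: norm_mult)
  qed
  also have "\<dots> = (t * (l2_norm f)^2 + (l2_norm g)^2 / t) / 2"
    using L2D(2)[OF assms(1)] L2D(2)[OF assms(2)] unfolding l2_norm_sq
    by (simp add: Bochner_Integration.integral_add)
  finally show ?thesis .
qed

lemma CS: assumes "f \<in> L2" "g \<in> L2"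
  shows "cmod (l2_inner f g) \<le> l2_norm f * l2_norm g"
proof -
  define c where "c = cmod (l2_inner f g)"
  define a where "a = l2_norm f"
  define b where "b = l2_norm g"
  have P: "\<And>t. t > 0 \<Longrightarrow> c \<le> (t * a^2 + b^2 / t) / 2"
    using CS_param[OF assms] unfolding a_def b_def c_def by auto
  have a0: "a \<ge> 0" "b \<ge> 0" "c \<ge> 0" by (auto simp: a_def b_def c_def)
  show ?thesis
  proof (cases "a = 0 \<or> b = 0")
    case True
    have "c \<le> 0"
    proof (rule ccontr)
      assume "\<not> c \<le> 0" then have c: "c > 0" by simp
      show False
      proof (cases "a = 0")
        case True
        define t where "t = b^2 / c + 1"
        have "b^2 / c \<ge> 0" using c by simp
        then have t: "t > 0" unfolding t_def by linarith
        have "c \<le> b^2 / t / 2" using P[OF t] True by simp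
        moreover have "b^2 / t < c"
        proof -
          have "b^2 < c * t" using c by (simp add: t_def algebra_simps)
          then show ?thesis using t by (simp add: divide_less_eq)
        qed
        moreover have "b^2 / t / 2 \<le> b^2 / t" using t by (simp add: field_simps)
        ultimately show False by linarith
      next
        case False
        then have b: "b = 0" using True by simp
        define t where "t = c / (a^2 + 1)"
        have a1: "a^2 + 1 > 0" by (metis add_nonneg_pos zero_le_power2 zero_less_one)
        have t: "t > 0" using c a1 unfolding t_def by (rule divide_pos_pos)
        have "c \<le> t * a^2 / 2" using P[OF t] b by simp
        moreover have "t * a^2 < c * 2"
        proof -
          have "t * a^2 = c * (a^2 / (a^2 + 1))" by (simp add: t_def)
          also have "\<dots> < c * 2" using c
            using a1 by (intro mult_strict_left_mono) (auto simp: divide_less_eq)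
          finally show ?thesis .
        qed
        ultimately show False by simp
      qed
    qed
    then show ?thesis using True a0 by (auto simp: a_def b_def c_def)
  next
    case False
    then have ap: "a > 0" "b > 0" using a0 by auto
    define t where "t = b / a"
    have t: "t > 0" using ap by (simp add: t_def)
    have "t * a^2 = a * b" using ap by (simp add: t_def power2_eq_square)
    moreover have "b^2 / t = a * b" using ap by (simp add: t_def power2_eq_square)
    ultimately have "c \<le> a * b" using P[OF t] by simp
    then show ?thesis by (simp add: a_def b_def c_def)
  qed
qed

lemma ip_expand_add: assumes "f \<in> L2" "g \<in> L2"
  shows "(l2_norm (\<lambda>x. f x + g x))^2 = (l2_norm f)^2 + (l2_norm g)^2 + 2 * Re (l2_inner f g)"
proof -
  have s: "(\<lambda>x. f x + g x) \<in> L2" using L2_add[OF assms] .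
  have "l2_inner (\<lambda>x. f x + g x) (\<lambda>x. f x + g x) = l2_inner f f + l2_inner f g + (l2_inner g f + l2_inner g g)"
    using assms s by (simp add: ip_add_left ip_add_right)
  then have "Re (l2_inner (\<lambda>x. f x + g x) (\<lambda>x. f x + g x)) = Re (l2_inner f f) + Re (l2_inner g g) + 2 * Re (l2_inner f g)"
    by (subst (asm) ip_cnj[of g f]) simp
  then show ?thesis using norm_sq_Re assms s by simp
qed

lemma l2_norm_minus[simp]: "l2_norm (\<lambda>x. - g x) = l2_norm g"
  using l2_norm_scale[of "-1" g] by simp

lemma ip_minus_right[simp]: "l2_inner f (\<lambda>x. - g x) = - l2_inner f g"
  using ip_scale_right[of f "-1" g] by simp

lemma ip_minus_left[simp]: "l2_inner (\<lambda>x. - g x) f = - l2_inner g f"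
  using ip_scale_left[of "-1" g f] by simp

lemma ip_expand_diff: assumes "f \<in> L2" "g \<in> L2"
  shows "(l2_norm (\<lambda>x. f x - g x))^2 = (l2_norm f)^2 + (l2_norm g)^2 - 2 * Re (l2_inner f g)"
proof -
  have "(l2_norm (\<lambda>x. f x + (-1) * g x))^2 = (l2_norm f)^2 + (l2_norm (\<lambda>x. (-1) * g x))^2 + 2 * Re (l2_inner f (\<lambda>x. (-1) * g x))"
    by (rule ip_expand_add[OF assms(1) L2_scale[OF assms(2)]])
  then show ?thesis by (simp add: l2_norm_scale ip_scale_right)
qed

lemma l2_norm_triangle: assumes "f \<in> L2" "g \<in> L2"
  shows "l2_norm (\<lambda>x. f x + g x) \<le> l2_norm f + l2_norm g"
proof -
  have "Re (l2_inner f g) \<le> l2_norm f * l2_norm g"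
    using CS[OF assms] complex_Re_le_cmod order_trans by blast
  then have "(l2_norm (\<lambda>x. f x + g x))^2 \<le> (l2_norm f + l2_norm g)^2"
    using ip_expand_add[OF assms] by (simp add: power2_sum)
  then show ?thesis by (rule power2_le_imp_le) simp
qed

lemma l2_norm_diff_commute: "l2_norm (\<lambda>x. f x - g x) = l2_norm (\<lambda>x. g x - f x)"
  using l2_norm_scale[of "-1" "\<lambda>x. f x - g x"] by simp

lemma l2_norm_triangle_diff: assumes "f \<in> L2" "g \<in> L2" "h \<in> L2"
  shows "l2_norm (\<lambda>x. f x - h x) \<le> l2_norm (\<lambda>x. f x - g x) + l2_norm (\<lambda>x. g x - h x)"
  using l2_norm_triangle[OF L2_diff[OF assms(1,2)] L2_diff[OF assms(2,3)]] by simp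

lemma ip_conv_left: assumes "\<And>n. fs n \<in> L2" "f \<in> L2" "g \<in> L2" "l2_conv fs f"
  shows "(\<lambda>n. l2_inner (fs n) g) \<longlonglongrightarrow> l2_inner f g"
proof -
  have "(\<lambda>n. l2_norm (\<lambda>x. fs n x - f x) * l2_norm g) \<longlonglongrightarrow> 0 * l2_norm g"
    using assms(4) unfolding l2_conv_def by (intro tendsto_mult tendsto_const) auto
  moreover have "\<And>n. cmod (l2_inner (fs n) g - l2_inner f g) \<le> l2_norm (\<lambda>x. fs n x - f x) * l2_norm g"
    using CS[OF L2_diff[OF assms(1) assms(2)] assms(3)] ip_diff_left[OF assms(1) assms(2) assms(3)] by simp
  ultimately have "(\<lambda>n. l2_inner (fs n) g - l2_inner f g) \<longlonglongrightarrow> 0"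
    using Lim_null_comparison[OF always_eventually, of "\<lambda>n. l2_inner (fs n) g - l2_inner f g" "\<lambda>n. l2_norm (\<lambda>x. fs n x - f x) * l2_norm g"]
    by simp
  then show ?thesis by (simp add: LIM_zero_iff)
qed

lemma ip_conv_right: assumes "\<And>n. fs n \<in> L2" "f \<in> L2" "g \<in> L2" "l2_conv fs f"
  shows "(\<lambda>n. l2_inner g (fs n)) \<longlonglongrightarrow> l2_inner g f"
proof -
  have "(\<lambda>n. cnj (l2_inner (fs n) g)) \<longlonglongrightarrow> cnj (l2_inner f g)"
    using ip_conv_left[OF assms] by (intro tendsto_cnj)
  moreover have "(\<lambda>n. l2_inner g (fs n)) = (\<lambda>n. cnj (l2_inner (fs n) g))"
    by (rule ext) (rule ip_cnj)
  moreover have "l2_inner g f = cnj (l2_inner f g)" by (rule ip_cnj)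
  ultimately show ?thesis by simp
qed

lemma orth_limit: assumes "\<And>n. fs n \<in> L2" "f \<in> L2" "g \<in> L2" "l2_conv fs f" "\<And>n. l2_inner g (fs n) = 0"
  shows "l2_inner g f = 0"
proof -
  have "(\<lambda>n. l2_inner g (fs n)) \<longlonglongrightarrow> l2_inner g f" by (rule ip_conv_right[OF assms(1-4)])
  moreover have "(\<lambda>n. l2_inner g (fs n)) = (\<lambda>n. 0)" using assms(5) by (rule ext)
  ultimately have "(\<lambda>n. 0) \<longlonglongrightarrow> l2_inner g f" by simp
  then show ?thesis by (simp add: LIMSEQ_const_iff)
qed

lemma l2_conv_unique: assumes "\<And>n. fs n \<in> L2" "f \<in> L2" "g \<in> L2" "l2_conv fs f" "l2_conv fs g"
  shows "aeq f g"
proof -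
  have "\<And>n. l2_norm (\<lambda>x. f x - g x) \<le> l2_norm (\<lambda>x. fs n x - f x) + l2_norm (\<lambda>x. fs n x - g x)"
    using l2_norm_triangle_diff[OF assms(2) assms(1) assms(3)] l2_norm_diff_commute by metis
  moreover have "(\<lambda>n. l2_norm (\<lambda>x. fs n x - f x) + l2_norm (\<lambda>x. fs n x - g x)) \<longlonglongrightarrow> 0 + 0"
    using assms(4,5) unfolding l2_conv_def by (intro tendsto_add)
  ultimately have "l2_norm (\<lambda>x. f x - g x) \<le> 0"
    using LIMSEQ_le_const[of "\<lambda>n. l2_norm (\<lambda>x. fs n x - f x) + l2_norm (\<lambda>x. fs n x - g x)" 0 "l2_norm (\<lambda>x. f x - g x)"]
    by simp
  then have "aeq (\<lambda>x. f x - g x) (\<lambda>x. 0)" using l2_norm_zero_iff[OF L2_diff[OF assms(2,3)]] l2_norm_nonneg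
    by (meson order_antisym)
  then have "AE x in lborel. f x - g x = 0" unfolding aeq_def .
  then show ?thesis unfolding aeq_def by eventually_elim simp
qed


lemma L2_borel: "f \<in> L2 \<Longrightarrow> f \<in> borel_measurable borel"
  using L2D(1) by (simp add: measurable_lborel1)

lemma affine_meas: fixes f :: "real \<Rightarrow> 'b::topological_space" and c t :: real assumes "f \<in> borel_measurable borel"
  shows "(\<lambda>x. f (c * x + t)) \<in> borel_measurable borel"
proof -
  have "(\<lambda>x::real. c * x + t) \<in> borel_measurable borel"
    by (intro borel_measurable_continuous_onI continuous_intros)
  then show ?thesis using measurable_compose[OF _ assms] by blast
qed

lemma int_affine: fixes F :: "real \<Rightarrow> complex" assumes "c \<noteq> 0"
  shows "integral\<^sup>L lborel (\<lambda>x. F (c * x + t)) = integral\<^sup>L lborel F / \<bar>c\<bar>"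
  using lborel_integral_real_affine[OF assms, of F t] assms
  by (simp add: scaleR_conv_of_real add.commute)

lemma int_affine_real: fixes F :: "real \<Rightarrow> real" assumes "c \<noteq> 0"
  shows "integral\<^sup>L lborel (\<lambda>x. F (c * x + t)) = integral\<^sup>L lborel F / \<bar>c\<bar>"
  using lborel_integral_real_affine[OF assms, of F t] assms
  by (simp add: add.commute)

lemma integrable_affine: fixes F :: "real \<Rightarrow> 'a::{banach, second_countable_topology}"
  assumes "c \<noteq> 0" "integrable lborel F"
  shows "integrable lborel (\<lambda>x. F (c * x + t))"
  using lborel_integrable_real_affine[OF assms(2) assms(1), of t] by (simp add: add.commute)

lemma Dpow_alt: "Dpow j f = (\<lambda>x. complex_of_real (2 powr (real_of_int j / 2)) * f (2 powr real_of_int j * x + 0))"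
  by (simp add: Dpow_def)

lemma Tpow_alt: "Tpow k f = (\<lambda>x. f (1 * x + (- real_of_int k)))"
  by (simp add: Tpow_def)

lemma powr_half_sq: "(2 powr (r / 2)) ^ 2 = (2::real) powr r"
  by (simp add: power2_eq_square powr_add[symmetric])

lemma Dpow_L2: assumes "f \<in> L2" shows "Dpow j f \<in> L2"
proof (rule L2I)
  have [measurable]: "f \<in> borel_measurable borel" using L2_borel[OF assms] .
  have [measurable]: "(\<lambda>x. f (2 powr real_of_int j * x + 0)) \<in> borel_measurable borel" by (rule affine_meas) fact
  show "Dpow j f \<in> borel_measurable lborel" unfolding Dpow_def by simp
  have "integrable lborel (\<lambda>x. (2 powr real_of_int j) * (cmod (f (2 powr real_of_int j * x + 0)))^2)"
    using integrable_affine[OF _ L2D(2)[OF assms], of "2 powr real_of_int j" 0] by simp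
  then show "integrable lborel (\<lambda>x. (cmod (Dpow j f x))^2)"
    by (simp add: Dpow_def norm_mult power_mult_distrib powr_half_sq)
qed

lemma Tpow_L2: assumes "f \<in> L2" shows "Tpow k f \<in> L2"
proof (rule L2I)
  have [measurable]: "f \<in> borel_measurable borel" using L2_borel[OF assms] .
  have "(\<lambda>x. f (1 * x + - real_of_int k)) \<in> borel_measurable borel" by (rule affine_meas) fact
  then show "Tpow k f \<in> borel_measurable lborel" unfolding Tpow_def by simp
  have "integrable lborel (\<lambda>x. (cmod (f (1 * x + (- real_of_int k))))^2)"
    using integrable_affine[OF _ L2D(2)[OF assms], of 1 "- real_of_int k"] by simp
  then show "integrable lborel (\<lambda>x. (cmod (Tpow k f x))^2)"
    by (simp add: Tpow_def)
qed

lemma ip_Dpow: assumes "f \<in> L2" "g \<in> L2"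
  shows "l2_inner (Dpow j f) (Dpow j g) = l2_inner f g"
proof -
  define c where "c = (2::real) powr real_of_int j"
  have c: "c > 0" by (simp add: c_def)
  have "\<And>x. Dpow j f x * cnj (Dpow j g x) = complex_of_real c * (f (c * x + 0) * cnj (g (c * x + 0)))"
  proof -
    fix x
    have "complex_of_real (2 powr (real_of_int j / 2)) * complex_of_real (2 powr (real_of_int j / 2)) = complex_of_real c"
      by (simp add: c_def powr_add[symmetric] of_real_mult[symmetric] del: of_real_mult)
    then show "Dpow j f x * cnj (Dpow j g x) = complex_of_real c * (f (c * x + 0) * cnj (g (c * x + 0)))"
      unfolding Dpow_def c_def by (simp add: mult_ac)
  qed
  then have "l2_inner (Dpow j f) (Dpow j g) = complex_of_real c * integral\<^sup>L lborel (\<lambda>x. f (c * x + 0) * cnj (g (c * x + 0)))"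
    unfolding l2_inner_def by simp
  also have "\<dots> = complex_of_real c * (l2_inner f g / c)"
    using int_affine[of c "\<lambda>y. f y * cnj (g y)" 0] c unfolding l2_inner_def by simp
  also have "\<dots> = l2_inner f g" using c by simp
  finally show ?thesis .
qed

lemma ip_Tpow: assumes "f \<in> L2" "g \<in> L2"
  shows "l2_inner (Tpow k f) (Tpow k g) = l2_inner f g"
  using int_affine[of 1 "\<lambda>y. f y * cnj (g y)" "- real_of_int k"] unfolding l2_inner_def Tpow_def by simp

lemma Dpow_Dpow: "Dpow a (Dpow b f) = Dpow (a + b) f"
proof (rule ext)
  fix x
  have "complex_of_real (2 powr (real_of_int a / 2)) * complex_of_real (2 powr (real_of_int b / 2)) = complex_of_real (2 powr (real_of_int (a + b) / 2))"
    by (simp add: powr_add[symmetric] of_real_mult[symmetric] add_divide_distrib del: of_real_mult)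
  moreover have "2 powr real_of_int b * (2 powr real_of_int a * x) = 2 powr real_of_int (a + b) * x"
    by (simp add: powr_add mult_ac)
  ultimately show "Dpow a (Dpow b f) x = Dpow (a + b) f x"
    unfolding Dpow_def by (metis (no_types, lifting) mult.assoc)
qed

lemma Dpow_zero[simp]: "Dpow 0 f = f" by (simp add: Dpow_def)

lemma Dil_Dpow: "Dil = Dpow 1"
  by (rule ext, rule ext) (simp add: Dil_def Dpow_def powr_half_sqrt)

lemma Dpow_add: "Dpow j (\<lambda>x. f x + g x) = (\<lambda>x. Dpow j f x + Dpow j g x)"
  by (simp add: Dpow_def distrib_left)
lemma Dpow_diff: "Dpow j (\<lambda>x. f x - g x) = (\<lambda>x. Dpow j f x - Dpow j g x)"
  by (simp add: Dpow_def right_diff_distrib)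
lemma Dpow_scale: "Dpow j (\<lambda>x. c * f x) = (\<lambda>x. c * Dpow j f x)"
  by (simp add: Dpow_def mult_ac)
lemma Dpow_zero_fun[simp]: "Dpow j (\<lambda>x. 0) = (\<lambda>x. 0)"
  by (simp add: Dpow_def)

lemma ip_Dpow_adj: assumes "f \<in> L2" "g \<in> L2"
  shows "l2_inner (Dpow j f) g = l2_inner f (Dpow (- j) g)"
proof -
  have "l2_inner (Dpow j f) g = l2_inner (Dpow j f) (Dpow j (Dpow (- j) g))"
    by (simp add: Dpow_Dpow)
  also have "\<dots> = l2_inner f (Dpow (- j) g)" using ip_Dpow[OF assms(1) Dpow_L2[OF assms(2)]] .
  finally show ?thesis .
qed

lemma l2_norm_Dpow: assumes "f \<in> L2" shows "l2_norm (Dpow j f) = l2_norm f"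
proof -
  have "complex_of_real ((l2_norm (Dpow j f))^2) = complex_of_real ((l2_norm f)^2)"
    using ip_Dpow[OF assms assms, of j] ip_self[OF assms] ip_self[OF Dpow_L2[OF assms]] by simp
  then have "(l2_norm (Dpow j f))^2 = (l2_norm f)^2" using of_real_eq_iff by blast
  then show ?thesis by (simp add: power2_eq_iff_nonneg)
qed

lemma aeq_Dpow: assumes "f \<in> L2" "g \<in> L2" "aeq f g" shows "aeq (Dpow j f) (Dpow j g)"
proof -
  have d: "(\<lambda>x. f x - g x) \<in> L2" using L2_diff[OF assms(1,2)] .
  have "aeq (\<lambda>x. f x - g x) (\<lambda>x. 0)" using assms(3) unfolding aeq_def by eventually_elim simp
  then have "l2_norm (\<lambda>x. f x - g x) = 0" using l2_norm_zero_iff[OF d] by simp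
  then have "l2_norm (Dpow j (\<lambda>x. f x - g x)) = 0" using l2_norm_Dpow[OF d] by simp
  then have "aeq (Dpow j (\<lambda>x. f x - g x)) (\<lambda>x. 0)" using l2_norm_zero_iff[OF Dpow_L2[OF d]] by simp
  then have "AE x in lborel. Dpow j f x - Dpow j g x = 0" unfolding aeq_def Dpow_diff .
  then show ?thesis unfolding aeq_def by eventually_elim simp
qed


lemma nn_sq: assumes "f \<in> L2"
  shows "(\<integral>\<^sup>+x. ennreal ((cmod (f x))^2) \<partial>lborel) = ennreal ((l2_norm f)^2)"
  unfolding l2_norm_sq using L2D(2)[OF assms] by (intro nn_integral_eq_integral) auto

lemma abs_le_amgm: fixes a :: real assumes "a \<ge> 0"
  shows "a \<le> (1/2)^k + 2^k * a^2"
proof -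
  have "a \<le> ((1/2)^k + 2^k * a^2)" 
  proof (cases "a \<le> (1/2)^k")
    case True then show ?thesis by (smt (verit) zero_le_power2 zero_le_power mult_nonneg_nonneg)
  next
    case False
    then have "2^k * a \<ge> 1"
    proof -
      have "(2::real)^k * (1/2)^k = 1" by (simp add: power_mult_distrib[symmetric])
      moreover have "2^k * (1/2)^k \<le> (2::real)^k * a" using False by (intro mult_left_mono) auto
      ultimately show ?thesis by simp
    qed
    then have "a \<le> (2^k * a) * a" using assms mult_right_mono[of 1 "2^k*a" a] by simp
    moreover have "(1/2::real)^k \<ge> 0" by simp
    moreover have "2^k * a^2 = (2^k * a) * a" by (simp add: power2_eq_square)
    ultimately show ?thesis by linarith
  qed
  then show ?thesis .
qed

theorem riesz_fischer:
  assumes L: "\<And>n. fs n \<in> L2"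
    and C: "\<And>e. e > 0 \<Longrightarrow> \<exists>N. \<forall>m\<ge>N. \<forall>n\<ge>N. l2_norm (\<lambda>x. fs m x - fs n x) < e"
  shows "\<exists>f\<in>L2. l2_conv fs f"
proof -
  define Nf where "Nf e = (SOME N. \<forall>m\<ge>N. \<forall>n\<ge>N. l2_norm (\<lambda>x. fs m x - fs n x) < e)" for e :: real
  have Nf: "\<And>e m n. e > 0 \<Longrightarrow> m \<ge> Nf e \<Longrightarrow> n \<ge> Nf e \<Longrightarrow> l2_norm (\<lambda>x. fs m x - fs n x) < e"
  proof -
    fix e :: real and m n assume "e > 0" "m \<ge> Nf e" "n \<ge> Nf e"
    from someI_ex[OF C[OF \<open>e > 0\<close>]] show "l2_norm (\<lambda>x. fs m x - fs n x) < e"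
      using \<open>m \<ge> Nf e\<close> \<open>n \<ge> Nf e\<close> unfolding Nf_def by blast
  qed
  define q :: "nat \<Rightarrow> real" where "q k = (1/4)^k" for k
  have qpos: "\<And>k. q k > 0" by (simp add: q_def)
  define r :: "nat \<Rightarrow> nat" where "r = rec_nat (Nf (q 0)) (\<lambda>k rk. max (Suc rk) (Nf (q (Suc k))))"
  have r0: "r 0 = Nf (q 0)" by (simp add: r_def)
  have rS: "\<And>k. r (Suc k) = max (Suc (r k)) (Nf (q (Suc k)))" by (simp add: r_def)
  have rN: "\<And>k. r k \<ge> Nf (q k)"
    by (case_tac k) (simp_all add: r0 rS)
  have rmono: "\<And>k. r k < r (Suc k)" using rS by simp
  then have rmono': "\<And>k m. k \<le> m \<Longrightarrow> r k \<le> r m"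
    by (metis lift_Suc_mono_le order_less_imp_le)
  have rge: "\<And>k. k \<le> r k" by (metis strict_mono_Suc_iff strict_mono_imp_increasing rmono)
  have key: "\<And>k m. m \<ge> r k \<Longrightarrow> l2_norm (\<lambda>x. fs m x - fs (r k) x) < q k"
    using Nf qpos rN by (meson order_trans order_refl)
  define phi where "phi k = fs (r k)" for k
  define d where "d k x = phi (Suc k) x - phi k x" for k x
  have phiL: "\<And>k. phi k \<in> L2" using L by (simp add: phi_def)
  have dL: "\<And>k. d k \<in> L2" unfolding d_def[abs_def] using L2_diff phiL by blast
  have [measurable]: "\<And>k. phi k \<in> borel_measurable borel" using phiL L2_borel by blast
  have [measurable]: "\<And>k. d k \<in> borel_measurable borel" using dL L2_borel by blast
  have dnorm: "\<And>k. l2_norm (d k) < q k"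
    using key[of k "r (Suc k)" for k] rmono unfolding d_def[abs_def] phi_def by (simp add: less_imp_le)
  define E where "E x = (\<Sum>k. ennreal (2^k * (cmod (d k x))^2))" for x
  have Emeas[measurable]: "E \<in> borel_measurable borel" unfolding E_def by measurable
  have "(\<integral>\<^sup>+x. E x \<partial>lborel) = (\<Sum>k. \<integral>\<^sup>+x. ennreal (2^k * (cmod (d k x))^2) \<partial>lborel)"
    unfolding E_def by (rule nn_integral_suminf) measurable
  also have "\<dots> = (\<Sum>k. ennreal (2^k * (l2_norm (d k))^2))"
  proof (rule arg_cong[where f=suminf], rule ext)
    fix k
    have "(\<integral>\<^sup>+x. ennreal (2^k * (cmod (d k x))^2) \<partial>lborel) = (\<integral>\<^sup>+x. ennreal (2^k) * ennreal ((cmod (d k x))^2) \<partial>lborel)"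
      by (simp add: ennreal_mult)
    also have "\<dots> = ennreal (2^k) * (\<integral>\<^sup>+x. ennreal ((cmod (d k x))^2) \<partial>lborel)"
      by (rule nn_integral_cmult) measurable
    also have "\<dots> = ennreal (2^k * (l2_norm (d k))^2)" using nn_sq[OF dL[of k]] by (simp add: ennreal_mult)
    finally show "(\<integral>\<^sup>+x. ennreal (2^k * (cmod (d k x))^2) \<partial>lborel) = ennreal (2^k * (l2_norm (d k))^2)" .
  qed
  also have "\<dots> \<le> (\<Sum>k. ennreal ((1/8)^k))"
  proof (rule suminf_le[OF ennreal_leI summableI summableI])
    fix k
    have "(l2_norm (d k))^2 \<le> (q k)^2" using dnorm[of k] by (intro power_mono) auto
    then have "2^k * (l2_norm (d k))^2 \<le> 2^k * (q k)^2" by simp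
    also have "\<dots> = (1/8)^k" unfolding q_def by (simp add: power_mult_distrib[symmetric] power_mult[symmetric] power2_eq_square)
    finally show "2^k * (l2_norm (d k))^2 \<le> (1/8)^k" .
  qed
  also have "\<dots> = ennreal (\<Sum>k. (1/8)^k)"
  proof -
    have s8: "summable (\<lambda>k. (1/8::real)^k)" by (simp add: summable_geometric)
    have ne: "(\<Sum>k. ennreal ((1/8::real)^k)) \<noteq> top" by (rule ennreal_suminf_neq_top[OF s8]) simp
    show ?thesis by (rule suminf_ennreal[OF _ ne]) simp
  qed
  finally have "(\<integral>\<^sup>+x. E x \<partial>lborel) \<noteq> \<infinity>" by (auto simp: top_unique)
  then have AEfin: "AE x in lborel. E x \<noteq> \<infinity>" by (intro nn_integral_PInf_AE) auto
  have conv: "AE x in lborel. convergent (\<lambda>k. phi k x)"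
    using AEfin
  proof eventually_elim
    case (elim x)
    have s1: "summable (\<lambda>k. 2^k * (cmod (d k x))^2)"
      using elim unfolding E_def by (intro summable_suminf_not_top) auto
    have s2: "summable (\<lambda>k. (1/2)^k + 2^k * (cmod (d k x))^2)"
      by (intro summable_add s1) (simp add: summable_geometric)
    have "summable (\<lambda>k. norm (d k x))"
      by (rule summable_comparison_test[OF _ s2]) (auto intro!: exI[of _ 0] abs_le_amgm)
    then have sd: "summable (\<lambda>k. d k x)" by (rule summable_norm_cancel)
    have "(\<lambda>k. \<Sum>j<k. d j x) \<longlonglongrightarrow> (\<Sum>j. d j x)" using sd by (rule summable_LIMSEQ)
    then have "(\<lambda>k. phi 0 x + (\<Sum>j<k. d j x)) \<longlonglongrightarrow> phi 0 x + (\<Sum>j. d j x)"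
      by (intro tendsto_add tendsto_const)
    moreover have "\<And>k. phi 0 x + (\<Sum>j<k. d j x) = phi k x"
      unfolding d_def using sum_lessThan_telescope[of "\<lambda>j. phi j x"] by simp
    ultimately show ?case unfolding convergent_def by auto
  qed
  define f where "f x = lim (\<lambda>k. phi k x)" for x
  have fmeas[measurable]: "f \<in> borel_measurable borel" unfolding f_def by measurable
  have flim: "AE x in lborel. (\<lambda>k. phi k x) \<longlonglongrightarrow> f x"
    using conv by eventually_elim (simp add: f_def convergent_LIMSEQ_iff)
  \<comment> \<open>tail estimate by Fatou\<close>
  have tail: "\<And>k. (\<lambda>x. f x - phi k x) \<in> L2 \<and> l2_norm (\<lambda>x. f x - phi k x) \<le> q k"
  proof -
    fix k
    have "(\<integral>\<^sup>+x. ennreal ((cmod (f x - phi k x))^2) \<partial>lborel)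
        = (\<integral>\<^sup>+x. liminf (\<lambda>m. ennreal ((cmod (phi m x - phi k x))^2)) \<partial>lborel)"
    proof (rule nn_integral_cong_AE)
      show "AE x in lborel. ennreal ((cmod (f x - phi k x))^2) = liminf (\<lambda>m. ennreal ((cmod (phi m x - phi k x))^2))"
        using flim
      proof eventually_elim
        case (elim x)
        have "(\<lambda>m. ennreal ((cmod (phi m x - phi k x))^2)) \<longlonglongrightarrow> ennreal ((cmod (f x - phi k x))^2)"
          by (intro tendsto_ennrealI tendsto_intros elim)
        then show ?case by (intro lim_imp_Liminf[symmetric]) auto
      qed
    qed
    also have "\<dots> \<le> liminf (\<lambda>m. \<integral>\<^sup>+x. ennreal ((cmod (phi m x - phi k x))^2) \<partial>lborel)"
      by (rule nn_integral_liminf) measurable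
    also have "\<dots> \<le> ennreal ((q k)^2)"
    proof (rule Liminf_le)
      show "eventually (\<lambda>m. (\<integral>\<^sup>+x. ennreal ((cmod (phi m x - phi k x))^2) \<partial>lborel) \<le> ennreal ((q k)^2)) sequentially"
      proof (rule eventually_sequentiallyI[of k])
        fix m assume "k \<le> m"
        then have "l2_norm (\<lambda>x. phi m x - phi k x) < q k"
          unfolding phi_def using key rmono' by blast
        then have "(l2_norm (\<lambda>x. phi m x - phi k x))^2 \<le> (q k)^2" by (intro power_mono) auto
        then show "(\<integral>\<^sup>+x. ennreal ((cmod (phi m x - phi k x))^2) \<partial>lborel) \<le> ennreal ((q k)^2)"
          using nn_sq[OF L2_diff[OF phiL phiL, of m k]] by (simp add: ennreal_leI)
      qed
    qed simp
    finally have bnd: "(\<integral>\<^sup>+x. ennreal ((cmod (f x - phi k x))^2) \<partial>lborel) \<le> ennreal ((q k)^2)" .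
    have int: "integrable lborel (\<lambda>x. (cmod (f x - phi k x))^2)"
      by (rule integrableI_nonneg) (use bnd in \<open>auto simp: top_unique less_top[symmetric] intro: le_less_trans\<close>)
    have mL: "(\<lambda>x. f x - phi k x) \<in> L2" by (rule L2I) (use int in auto)
    have "(l2_norm (\<lambda>x. f x - phi k x))^2 = enn2real (\<integral>\<^sup>+x. ennreal ((cmod (f x - phi k x))^2) \<partial>lborel)"
      unfolding l2_norm_sq by (rule integral_eq_nn_integral) auto
    also have "\<dots> \<le> (q k)^2" by (rule enn2real_leI[OF _ bnd]) simp
    finally have sq: "(l2_norm (\<lambda>x. f x - phi k x))^2 \<le> (q k)^2" .
    have "0 \<le> q k" using qpos[of k] by simp
    with sq have "l2_norm (\<lambda>x. f x - phi k x) \<le> q k" by (rule power2_le_imp_le)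
    with mL show "(\<lambda>x. f x - phi k x) \<in> L2 \<and> l2_norm (\<lambda>x. f x - phi k x) \<le> q k" by simp
  qed
  have fL: "f \<in> L2" using L2_add[OF conjunct1[OF tail[of 0]] phiL[of 0]] by simp
  have "l2_conv fs f"
    unfolding l2_conv_def
  proof (rule LIMSEQ_I)
    fix e :: real assume e: "e > 0"
    obtain k where k: "(1/4::real)^k < e / 2"
      using real_arch_pow_inv[of "e/2" "1/4"] e by auto
    show "\<exists>N. \<forall>n\<ge>N. norm (l2_norm (\<lambda>x. fs n x - f x) - 0) < e"
    proof (intro exI[of _ "r k"] allI impI)
      fix n assume n: "r k \<le> n"
      have "l2_norm (\<lambda>x. fs n x - f x) \<le> l2_norm (\<lambda>x. fs n x - phi k x) + l2_norm (\<lambda>x. phi k x - f x)"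
        by (rule l2_norm_triangle_diff[OF L phiL fL])
      also have "\<dots> < q k + q k"
        using key[OF n] tail[of k] l2_norm_diff_commute[of "phi k" f] unfolding phi_def by simp
      also have "\<dots> < e" using k unfolding q_def by simp
      finally show "norm (l2_norm (\<lambda>x. fs n x - f x) - 0) < e" by simp
    qed
  qed
  with fL show ?thesis by blast
qed


definition csub :: "cfun set \<Rightarrow> bool" where
  "csub V \<longleftrightarrow> V \<subseteq> L2 \<and> (\<lambda>x. 0) \<in> V \<and> (\<forall>f\<in>V. \<forall>g\<in>V. (\<lambda>x. f x + g x) \<in> V)
     \<and> (\<forall>c. \<forall>f\<in>V. (\<lambda>x. c * f x) \<in> V)
     \<and> (\<forall>fs f. (\<forall>n. fs n \<in> V) \<and> f \<in> L2 \<and> l2_conv fs f \<longrightarrow> f \<in> V)"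

lemma parallelogram: assumes "a \<in> L2" "b \<in> L2"
  shows "(l2_norm (\<lambda>x. a x + b x))^2 + (l2_norm (\<lambda>x. a x - b x))^2 = 2 * (l2_norm a)^2 + 2 * (l2_norm b)^2"
  using ip_expand_add[OF assms] ip_expand_diff[OF assms] by simp

lemma csubD: assumes "csub V"
  shows "V \<subseteq> L2" "(\<lambda>x. 0) \<in> V" "f \<in> V \<Longrightarrow> g \<in> V \<Longrightarrow> (\<lambda>x. f x + g x) \<in> V"
    "f \<in> V \<Longrightarrow> (\<lambda>x. c * f x) \<in> V"
    "(\<And>n. fs n \<in> V) \<Longrightarrow> f \<in> L2 \<Longrightarrow> l2_conv fs f \<Longrightarrow> f \<in> V"
  using assms unfolding csub_def by blast+

lemma csub_diff: "csub V \<Longrightarrow> f \<in> V \<Longrightarrow> g \<in> V \<Longrightarrow> (\<lambda>x. f x - g x) \<in> V"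
  using csubD(3)[of V f "\<lambda>x. (-1) * g x"] csubD(4)[of V g "-1"] by simp

theorem projection:
  assumes V: "csub V" and g: "g \<in> L2"
  shows "\<exists>v\<in>V. \<forall>w\<in>V. l2_inner w (\<lambda>x. g x - v x) = 0"
proof -
  have VL: "\<And>v. v \<in> V \<Longrightarrow> v \<in> L2" using csubD(1)[OF V] by auto
  define D where "D = (\<lambda>v. l2_norm (\<lambda>x. g x - v x)) ` V"
  define d where "d = Inf D"
  have Dne: "D \<noteq> {}" using csubD(2)[OF V] by (auto simp: D_def)
  have Dbdd: "bdd_below D" unfolding D_def by (rule bdd_belowI[of _ 0]) auto
  have dle: "\<And>v. v \<in> V \<Longrightarrow> d \<le> l2_norm (\<lambda>x. g x - v x)"
    unfolding d_def D_def using Dbdd D_def by (auto intro!: cInf_lower)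
  have d0: "d \<ge> 0" unfolding d_def by (rule cInf_greatest[OF Dne]) (auto simp: D_def)
  have "\<forall>n. \<exists>v\<in>V. l2_norm (\<lambda>x. g x - v x) < d + 1 / (Suc n)"
  proof
    fix n :: nat
    have "Inf D < d + 1 / Suc n" unfolding d_def by simp
    then obtain y where "y \<in> D" "y < d + 1 / Suc n" using cInf_lessD[OF Dne] by blast
    then show "\<exists>v\<in>V. l2_norm (\<lambda>x. g x - v x) < d + 1 / (Suc n)" by (auto simp: D_def)
  qed
  then obtain vs where vsV: "\<And>n. vs n \<in> V" and vsn: "\<And>n. l2_norm (\<lambda>x. g x - vs n x) < d + 1 / (Suc n)"
    by metis
  have vsL: "\<And>n. vs n \<in> L2" using VL vsV by blast
  define eps :: "nat \<Rightarrow> real" where "eps n = 1 / Suc n" for n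
  have eps01: "\<And>n. 0 < eps n \<and> eps n \<le> 1" by (simp add: eps_def)
  have epsmono: "\<And>n N. N \<le> n \<Longrightarrow> eps n \<le> eps N"
    by (simp add: eps_def frac_le)
  have sqb: "\<And>n. (l2_norm (\<lambda>x. g x - vs n x))^2 \<le> d^2 + (2 * d + 1) * eps n"
  proof -
    fix n
    have "(l2_norm (\<lambda>x. g x - vs n x))^2 \<le> (d + eps n)^2"
      using vsn[of n] by (intro power_mono) (auto simp: eps_def less_imp_le)
    also have "\<dots> = d^2 + (2 * d + eps n) * eps n" by (simp add: power2_eq_square algebra_simps)
    also have "\<dots> \<le> d^2 + (2 * d + 1) * eps n" using eps01[of n] d0
      by (intro add_left_mono mult_right_mono) auto
    finally show "(l2_norm (\<lambda>x. g x - vs n x))^2 \<le> d^2 + (2 * d + 1) * eps n" .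
  qed
  have cauchy_sq: "\<And>m n. (l2_norm (\<lambda>x. vs m x - vs n x))^2 \<le> 2 * (2 * d + 1) * (eps m + eps n)"
  proof -
    fix m n
    define a where "a x = g x - vs m x" for x
    define b where "b x = g x - vs n x" for x
    have aL: "a \<in> L2" unfolding a_def[abs_def] using L2_diff[OF g vsL] .
    have bL: "b \<in> L2" unfolding b_def[abs_def] using L2_diff[OF g vsL] .
    have mid: "(\<lambda>x. (1/2) * (vs m x + vs n x)) \<in> V"
      using csubD(3)[OF V vsV vsV] csubD(4)[OF V] by blast
    have e: "(\<lambda>x. a x + b x) = (\<lambda>x. 2 * (g x - (1/2) * (vs m x + vs n x)))"
      by (rule ext) (simp add: a_def b_def algebra_simps)
    have "l2_norm (\<lambda>x. a x + b x) = cmod 2 * l2_norm (\<lambda>x. g x - (1/2) * (vs m x + vs n x))"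
      unfolding e by (rule l2_norm_scale)
    then have "l2_norm (\<lambda>x. a x + b x) = 2 * l2_norm (\<lambda>x. g x - (1/2) * (vs m x + vs n x))"
      by simp
    then have ab: "l2_norm (\<lambda>x. a x + b x) \<ge> 2 * d" using dle[OF mid] by simp
    have "(\<lambda>x. a x - b x) = (\<lambda>x. vs n x - vs m x)" by (rule ext) (simp add: a_def b_def)
    then have "(l2_norm (\<lambda>x. vs m x - vs n x))^2 = (l2_norm (\<lambda>x. a x - b x))^2"
      using l2_norm_diff_commute by metis
    also have "\<dots> = 2 * (l2_norm a)^2 + 2 * (l2_norm b)^2 - (l2_norm (\<lambda>x. a x + b x))^2"
      using parallelogram[OF aL bL] by simp
    also have "\<dots> \<le> 2 * (d^2 + (2 * d + 1) * eps m) + 2 * (d^2 + (2 * d + 1) * eps n) - (2 * d)^2"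
    proof -
      have "(2 * d)^2 \<le> (l2_norm (\<lambda>x. a x + b x))^2" using ab d0 by (intro power_mono) auto
      moreover have "(l2_norm a)^2 \<le> d^2 + (2 * d + 1) * eps m" using sqb[of m] by (simp add: a_def[abs_def])
      moreover have "(l2_norm b)^2 \<le> d^2 + (2 * d + 1) * eps n" using sqb[of n] by (simp add: b_def[abs_def])
      moreover have "\<And>X Y A B P Q::real. Y \<le> X \<Longrightarrow> A \<le> P \<Longrightarrow> B \<le> Q \<Longrightarrow> 2*A+2*B-X \<le> 2*P+2*Q-Y"
        by linarith
      ultimately show ?thesis by blast
    qed
    also have "\<dots> = 2 * (2 * d + 1) * (eps m + eps n)" by (simp add: power2_eq_square algebra_simps)
    finally show "(l2_norm (\<lambda>x. vs m x - vs n x))^2 \<le> 2 * (2 * d + 1) * (eps m + eps n)" .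
  qed
  have "\<exists>v\<in>L2. l2_conv vs v"
  proof (rule riesz_fischer[OF vsL])
    fix e :: real assume e: "e > 0"
    define K where "K = 4 * (2 * d + 1)"
    have K: "K > 0" using d0 by (simp add: K_def)
    obtain N :: nat where N: "K / e^2 < N" using reals_Archimedean2 by blast
    show "\<exists>N. \<forall>m\<ge>N. \<forall>n\<ge>N. l2_norm (\<lambda>x. vs m x - vs n x) < e"
    proof (intro exI[of _ N] allI impI)
      fix m n assume mn: "N \<le> m" "N \<le> n"
      have "eps m + eps n \<le> 2 * eps N" using epsmono[OF mn(1)] epsmono[OF mn(2)] by simp
      then have "2 * (2 * d + 1) * (eps m + eps n) \<le> 2 * (2 * d + 1) * (2 * eps N)"
        using d0 by (intro mult_left_mono) auto
      moreover have "2 * (2 * d + 1) * (2 * eps N) = K * eps N" unfolding K_def by simp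
      ultimately have "(l2_norm (\<lambda>x. vs m x - vs n x))^2 \<le> K * eps N"
        using cauchy_sq[of m n] by linarith
      also have "\<dots> < e^2"
      proof -
        have k1: "K < real N * e^2" using N e by (simp add: divide_less_eq)
        have k2: "real N * e^2 \<le> real (Suc N) * e^2" by (intro mult_right_mono) auto
        have "K < e^2 * Suc N" using k1 k2 by (simp add: mult.commute)
        then show ?thesis unfolding eps_def using e by (simp add: field_simps)
      qed
      finally show "l2_norm (\<lambda>x. vs m x - vs n x) < e"
        using e by (meson power_less_imp_less_base less_le)
    qed
  qed
  then obtain v where vL: "v \<in> L2" and vconv: "l2_conv vs v" by blast
  have vV: "v \<in> V" by (rule csubD(5)[OF V vsV vL vconv])
  have "l2_norm (\<lambda>x. g x - v x) \<le> d + 0 + 0"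
  proof (rule LIMSEQ_le_const)
    have e0: "eps \<longlonglongrightarrow> 0" unfolding eps_def
      using LIMSEQ_inverse_real_of_nat by (simp add: inverse_eq_divide)
    show "(\<lambda>n. d + eps n + l2_norm (\<lambda>x. vs n x - v x)) \<longlonglongrightarrow> d + 0 + 0"
      using vconv e0 unfolding l2_conv_def
      by (intro tendsto_add tendsto_const) auto
    show "\<exists>N. \<forall>n\<ge>N. l2_norm (\<lambda>x. g x - v x) \<le> d + eps n + l2_norm (\<lambda>x. vs n x - v x)"
    proof (intro exI[of _ 0] allI impI)
      fix n :: nat
      have "l2_norm (\<lambda>x. g x - v x) \<le> l2_norm (\<lambda>x. g x - vs n x) + l2_norm (\<lambda>x. vs n x - v x)"
        by (rule l2_norm_triangle_diff[OF g vsL vL])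
      then show "l2_norm (\<lambda>x. g x - v x) \<le> d + eps n + l2_norm (\<lambda>x. vs n x - v x)"
        using vsn[of n] unfolding eps_def by simp
    qed
  qed
  then have vmin: "l2_norm (\<lambda>x. g x - v x) \<le> d" by simp
  define r where "r x = g x - v x" for x
  have rL: "r \<in> L2" unfolding r_def[abs_def] using L2_diff[OF g vL] .
  have var: "\<And>z. z \<in> V \<Longrightarrow> 2 * Re (l2_inner r z) \<le> (l2_norm z)^2"
  proof -
    fix z assume z: "z \<in> V"
    have vz: "(\<lambda>x. v x + z x) \<in> V" using csubD(3)[OF V vV z] .
    have "l2_norm r \<le> l2_norm (\<lambda>x. r x - z x)"
      using vmin dle[OF vz] unfolding r_def by (simp add: algebra_simps)
    then have "(l2_norm r)^2 \<le> (l2_norm (\<lambda>x. r x - z x))^2" by (intro power_mono) auto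
    then show "2 * Re (l2_inner r z) \<le> (l2_norm z)^2"
      using ip_expand_diff[OF rL VL[OF z]] by simp
  qed
  have "\<forall>w\<in>V. l2_inner w r = 0"
  proof
    fix w assume w: "w \<in> V"
    define a where "a = l2_inner r w"
    define t :: real where "t = 1 / ((l2_norm w)^2 + 1)"
    have w1: "(l2_norm w)^2 + 1 > 0" by (metis add_nonneg_pos zero_le_power2 zero_less_one)
    have t: "t > 0" using w1 by (simp add: t_def)
    have z: "(\<lambda>x. (complex_of_real t * a) * w x) \<in> V" using csubD(4)[OF V w] .
    have "2 * Re (l2_inner r (\<lambda>x. (complex_of_real t * a) * w x)) \<le> (l2_norm (\<lambda>x. (complex_of_real t * a) * w x))^2"
      by (rule var[OF z])
    moreover have "l2_inner r (\<lambda>x. (complex_of_real t * a) * w x) = complex_of_real (t * (cmod a)^2)"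
    proof -
      have cz: "a * cnj a = (complex_of_real (cmod a))^2" by (metis complex_norm_square of_real_power)
      show ?thesis unfolding ip_scale_right a_def[symmetric] using cz by (simp add: mult.commute)
    qed
    moreover have "(l2_norm (\<lambda>x. (complex_of_real t * a) * w x))^2 = t^2 * (cmod a)^2 * (l2_norm w)^2"
      unfolding l2_norm_scale by (simp add: norm_mult power_mult_distrib abs_of_pos[OF t])
    ultimately have "2 * (t * (cmod a)^2) \<le> t^2 * (cmod a)^2 * (l2_norm w)^2" by simp
    then have "2 * (cmod a)^2 \<le> t * (cmod a)^2 * (l2_norm w)^2" using t
      by (simp add: power2_eq_square mult_ac)
    moreover have "t * (l2_norm w)^2 < 1"
      unfolding t_def using w1 by (simp add: divide_less_eq)
    then have "(cmod a)^2 * (t * (l2_norm w)^2) \<le> (cmod a)^2 * 1"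
      by (intro mult_left_mono) auto
    moreover have "t * (cmod a)^2 * (l2_norm w)^2 = (cmod a)^2 * (t * (l2_norm w)^2)" by (simp add: mult_ac)
    ultimately have "(cmod a)^2 \<le> 0" by linarith
    then have "a = 0" by simp
    then show "l2_inner w r = 0" unfolding a_def by (metis ip_cnj complex_cnj_zero)
  qed
  with vV show ?thesis unfolding r_def by blast
qed


lemma Dil_L2: "g \<in> L2 \<Longrightarrow> Dil g \<in> L2" by (simp add: Dil_Dpow Dpow_L2)
lemma ip_Dil: "f \<in> L2 \<Longrightarrow> g \<in> L2 \<Longrightarrow> l2_inner (Dil f) (Dil g) = l2_inner f g"
  by (simp add: Dil_Dpow ip_Dpow)
lemma l2_norm_Dil: "f \<in> L2 \<Longrightarrow> l2_norm (Dil f) = l2_norm f" by (simp add: Dil_Dpow l2_norm_Dpow)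
lemma Dil_add: "Dil (\<lambda>x. f x + g x) = (\<lambda>x. Dil f x + Dil g x)" by (simp add: Dil_def distrib_left)
lemma Dil_diff: "Dil (\<lambda>x. f x - g x) = (\<lambda>x. Dil f x - Dil g x)" by (simp add: Dil_def right_diff_distrib)
lemma Dil_scale: "Dil (\<lambda>x. c * f x) = (\<lambda>x. c * Dil f x)" by (simp add: Dil_def mult_ac)
lemma Dil_zero[simp]: "Dil (\<lambda>x. 0) = (\<lambda>x. 0)" by (simp add: Dil_def)

definition AD :: "cfun \<Rightarrow> cfun" where "AD g = (\<lambda>x. Dil g x - g x)"
definition AH :: "cfun \<Rightarrow> cfun" where "AH g = (\<lambda>x. \<i> * (Dil g x + g x))"

lemma AD_L2: "g \<in> L2 \<Longrightarrow> AD g \<in> L2" unfolding AD_def by (intro L2_diff Dil_L2)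
lemma AH_L2: "g \<in> L2 \<Longrightarrow> AH g \<in> L2" unfolding AH_def by (intro L2_scale L2_add Dil_L2)

lemma AD_add: "AD (\<lambda>x. f x + g x) = (\<lambda>x. AD f x + AD g x)" by (simp add: AD_def Dil_add algebra_simps)
lemma AH_add: "AH (\<lambda>x. f x + g x) = (\<lambda>x. AH f x + AH g x)" by (simp add: AH_def Dil_add algebra_simps)
lemma AD_scale: "AD (\<lambda>x. c * f x) = (\<lambda>x. c * AD f x)" by (simp add: AD_def Dil_scale algebra_simps)
lemma AH_scale: "AH (\<lambda>x. c * f x) = (\<lambda>x. c * AH f x)" by (simp add: AH_def Dil_scale algebra_simps)
lemma AD_diff: "AD (\<lambda>x. f x - g x) = (\<lambda>x. AD f x - AD g x)" by (simp add: AD_def Dil_diff algebra_simps)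
lemma AH_diff: "AH (\<lambda>x. f x - g x) = (\<lambda>x. AH f x - AH g x)" by (simp add: AH_def Dil_diff algebra_simps)

lemma AH_minus_iAD: "(\<lambda>x. AH g x - \<i> * AD g x) = (\<lambda>x. 2 * \<i> * g x)"
  by (simp add: AH_def AD_def algebra_simps)
lemma AH_plus_iAD: "(\<lambda>x. AH g x + \<i> * AD g x) = (\<lambda>x. 2 * \<i> * Dil g x)"
  by (simp add: AH_def AD_def algebra_simps)

lemma l2_norm_diff_bound: assumes "a \<in> L2" "b \<in> L2"
  shows "l2_norm (\<lambda>x. a x - b x) \<le> l2_norm a + l2_norm b"
  using l2_norm_triangle[OF assms(1) L2_minus[OF assms(2)]] by simp

lemma AD_conv: assumes "\<And>n. gs n \<in> L2" "g \<in> L2" "l2_conv gs g"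
  shows "l2_conv (\<lambda>n. AD (gs n)) (AD g)" "l2_conv (\<lambda>n. AH (gs n)) (AH g)"
proof -
  have dn: "\<And>n. (\<lambda>x. gs n x - g x) \<in> L2" using L2_diff assms by blast
  have e1: "\<And>n. (\<lambda>x. AD (gs n) x - AD g x) = AD (\<lambda>x. gs n x - g x)" by (simp add: AD_diff)
  have e2: "\<And>n. (\<lambda>x. AH (gs n) x - AH g x) = AH (\<lambda>x. gs n x - g x)" by (simp add: AH_diff)
  have b1: "l2_norm (AD (\<lambda>x. gs n x - g x)) \<le> 2 * l2_norm (\<lambda>x. gs n x - g x)" for n
    unfolding AD_def using l2_norm_diff_bound[OF Dil_L2[OF dn[of n]] dn[of n]] l2_norm_Dil[OF dn[of n]] by simp
  have b2: "l2_norm (AH (\<lambda>x. gs n x - g x)) \<le> 2 * l2_norm (\<lambda>x. gs n x - g x)" for n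
    unfolding AH_def l2_norm_scale using l2_norm_triangle[OF Dil_L2[OF dn[of n]] dn[of n]] l2_norm_Dil[OF dn[of n]] by simp
  have z: "(\<lambda>n. 2 * l2_norm (\<lambda>x. gs n x - g x)) \<longlonglongrightarrow> 0"
    using tendsto_mult_right_zero[OF assms(3)[unfolded l2_conv_def], of 2] by simp
  show "l2_conv (\<lambda>n. AD (gs n)) (AD g)" unfolding l2_conv_def e1
    by (rule Lim_null_comparison[OF always_eventually z]) (use b1 in simp)
  show "l2_conv (\<lambda>n. AH (gs n)) (AH g)" unfolding l2_conv_def e2
    by (rule Lim_null_comparison[OF always_eventually z]) (use b2 in simp)
qed

locale PSO =
  fixes S :: "(cfun \<times> cfun) set"
  assumes lop: "l2_op S" and clo: "closed_op S" and dense: "densely_defined S"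
    and sym: "symmetric_op S" and SA: "S \<subseteq> A_graph"
begin

lemma S_L2: "(f, h) \<in> S \<Longrightarrow> f \<in> L2 \<and> h \<in> L2"
  using lop unfolding l2_op_def by blast
lemma S_zero: "((\<lambda>x. 0), (\<lambda>x. 0)) \<in> S"
  using lop unfolding l2_op_def by blast
lemma S_add: "(f, h) \<in> S \<Longrightarrow> (g, k) \<in> S \<Longrightarrow> ((\<lambda>x. f x + g x), (\<lambda>x. h x + k x)) \<in> S"
  using lop unfolding l2_op_def by blast
lemma S_scale: "(f, h) \<in> S \<Longrightarrow> ((\<lambda>x. c * f x), (\<lambda>x. c * h x)) \<in> S"
  using lop unfolding l2_op_def by blast
lemma S_aeq: "(f, h) \<in> S \<Longrightarrow> f' \<in> L2 \<Longrightarrow> h' \<in> L2 \<Longrightarrow> aeq f f' \<Longrightarrow> aeq h h' \<Longrightarrow> (f', h') \<in> S"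
  using lop unfolding l2_op_def by blast

definition G0 :: "cfun set" where "G0 = {g \<in> L2. (AD g, AH g) \<in> S}"

lemma G0_L2: "g \<in> G0 \<Longrightarrow> g \<in> L2" by (simp add: G0_def)
lemma G0_S: "g \<in> G0 \<Longrightarrow> (AD g, AH g) \<in> S" by (simp add: G0_def)

lemma S_param: assumes "(f, h) \<in> S"
  shows "\<exists>g. g \<in> G0 \<and> aeq f (AD g) \<and> aeq h (AH g)"
proof -
  from assms SA obtain g where g: "g \<in> L2" "aeq f (\<lambda>x. Dil g x - g x)" "aeq h (\<lambda>x. \<i> * (Dil g x + g x))"
    unfolding A_graph_def by blast
  have "(AD g, AH g) \<in> S"
    using S_aeq[OF assms AD_L2[OF g(1)] AH_L2[OF g(1)]] g unfolding AD_def AH_def by blast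
  then show ?thesis using g unfolding G0_def AD_def AH_def by blast
qed

lemma adjD: "(u, k) \<in> adjoint_op S \<Longrightarrow> (f, h) \<in> S \<Longrightarrow> l2_inner h u = l2_inner f k"
  unfolding adjoint_op_def by blast

lemma adjI: "u \<in> L2 \<Longrightarrow> k \<in> L2 \<Longrightarrow> (\<And>f h. (f, h) \<in> S \<Longrightarrow> l2_inner h u = l2_inner f k) \<Longrightarrow> (u, k) \<in> adjoint_op S"
  unfolding adjoint_op_def by blast

lemma adj_L2: "(u, k) \<in> adjoint_op S \<Longrightarrow> u \<in> L2 \<and> k \<in> L2"
  unfolding adjoint_op_def by blast

lemma defect_L2: "v \<in> defect_space S \<mu> \<Longrightarrow> v \<in> L2"
  unfolding defect_space_def using adj_L2 by blast

lemma N_minus_iff: "v \<in> defect_space S (- \<i>) \<longleftrightarrow> v \<in> L2 \<and> (\<forall>g\<in>G0. l2_inner g v = 0)"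
proof
  assume v: "v \<in> defect_space S (- \<i>)"
  then have vL: "v \<in> L2" by (rule defect_L2)
  have adj: "(v, (\<lambda>x. - \<i> * v x)) \<in> adjoint_op S" using v unfolding defect_space_def by simp
  have "\<forall>g\<in>G0. l2_inner g v = 0"
  proof
    fix g assume g: "g \<in> G0"
    have gL: "g \<in> L2" using G0_L2[OF g] .
    have "l2_inner (AH g) v = l2_inner (AD g) (\<lambda>x. - \<i> * v x)" by (rule adjD[OF adj G0_S[OF g]])
    then have "l2_inner (AH g) v - \<i> * l2_inner (AD g) v = 0" by (simp add: ip_scale_right)
    then have "l2_inner (\<lambda>x. AH g x - \<i> * AD g x) v = 0"
      using ip_diff_left[OF AH_L2[OF gL] L2_scale[OF AD_L2[OF gL]] vL] ip_scale_left by simp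
    then have "l2_inner (\<lambda>x. (2 * \<i>) * g x) v = 0" unfolding AH_minus_iAD .
    then show "l2_inner g v = 0" by (simp add: ip_scale_left)
  qed
  with vL show "v \<in> L2 \<and> (\<forall>g\<in>G0. l2_inner g v = 0)" by simp
next
  assume v: "v \<in> L2 \<and> (\<forall>g\<in>G0. l2_inner g v = 0)"
  have "(v, (\<lambda>x. - \<i> * v x)) \<in> adjoint_op S"
  proof (rule adjI)
    show "v \<in> L2" using v by simp
    show "(\<lambda>x. - \<i> * v x) \<in> L2" using L2_scale v by blast
    fix f h assume fh: "(f, h) \<in> S"
    obtain g where g: "g \<in> G0" "aeq f (AD g)" "aeq h (AH g)" using S_param[OF fh] by blast
    have gL: "g \<in> L2" using G0_L2[OF g(1)] .
    have fL: "f \<in> L2" and hL: "h \<in> L2" using S_L2[OF fh] by auto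
    have "l2_inner h v = l2_inner (AH g) v" using ip_aeq_left[OF hL AH_L2[OF gL]] g(3) v by simp
    moreover have "l2_inner f v = l2_inner (AD g) v" using ip_aeq_left[OF fL AD_L2[OF gL]] g(2) v by simp
    moreover have "l2_inner (\<lambda>x. AH g x - \<i> * AD g x) v = l2_inner (AH g) v - \<i> * l2_inner (AD g) v"
      using ip_diff_left[OF AH_L2[OF gL] L2_scale[OF AD_L2[OF gL]]] v ip_scale_left by simp
    moreover have "l2_inner (\<lambda>x. AH g x - \<i> * AD g x) v = 0"
      unfolding AH_minus_iAD using v g(1) by (simp add: ip_scale_left)
    ultimately show "l2_inner h v = l2_inner f (\<lambda>x. - \<i> * v x)" by (simp add: ip_scale_right)
  qed
  then show "v \<in> defect_space S (- \<i>)" unfolding defect_space_def by simp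
qed

lemma N_plus_iff: "v \<in> defect_space S \<i> \<longleftrightarrow> v \<in> L2 \<and> (\<forall>g\<in>G0. l2_inner (Dil g) v = 0)"
proof
  assume v: "v \<in> defect_space S \<i>"
  then have vL: "v \<in> L2" by (rule defect_L2)
  have adj: "(v, (\<lambda>x. \<i> * v x)) \<in> adjoint_op S" using v unfolding defect_space_def by simp
  have "\<forall>g\<in>G0. l2_inner (Dil g) v = 0"
  proof
    fix g assume g: "g \<in> G0"
    have gL: "g \<in> L2" using G0_L2[OF g] .
    have "l2_inner (AH g) v = l2_inner (AD g) (\<lambda>x. \<i> * v x)" by (rule adjD[OF adj G0_S[OF g]])
    then have "l2_inner (AH g) v + \<i> * l2_inner (AD g) v = 0" by (simp add: ip_scale_right)
    then have "l2_inner (\<lambda>x. AH g x + \<i> * AD g x) v = 0"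
      using ip_add_left[OF AH_L2[OF gL] L2_scale[OF AD_L2[OF gL]] vL] ip_scale_left by simp
    then have "l2_inner (\<lambda>x. (2 * \<i>) * Dil g x) v = 0" unfolding AH_plus_iAD .
    then show "l2_inner (Dil g) v = 0" by (simp add: ip_scale_left)
  qed
  with vL show "v \<in> L2 \<and> (\<forall>g\<in>G0. l2_inner (Dil g) v = 0)" by simp
next
  assume v: "v \<in> L2 \<and> (\<forall>g\<in>G0. l2_inner (Dil g) v = 0)"
  have "(v, (\<lambda>x. \<i> * v x)) \<in> adjoint_op S"
  proof (rule adjI)
    show "v \<in> L2" using v by simp
    show "(\<lambda>x. \<i> * v x) \<in> L2" using L2_scale v by blast
    fix f h assume fh: "(f, h) \<in> S"
    obtain g where g: "g \<in> G0" "aeq f (AD g)" "aeq h (AH g)" using S_param[OF fh] by blast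
    have gL: "g \<in> L2" using G0_L2[OF g(1)] .
    have fL: "f \<in> L2" and hL: "h \<in> L2" using S_L2[OF fh] by auto
    have "l2_inner h v = l2_inner (AH g) v" using ip_aeq_left[OF hL AH_L2[OF gL]] g(3) v by simp
    moreover have "l2_inner f v = l2_inner (AD g) v" using ip_aeq_left[OF fL AD_L2[OF gL]] g(2) v by simp
    moreover have "l2_inner (\<lambda>x. AH g x + \<i> * AD g x) v = l2_inner (AH g) v + \<i> * l2_inner (AD g) v"
      using ip_add_left[OF AH_L2[OF gL] L2_scale[OF AD_L2[OF gL]]] v ip_scale_left by simp
    moreover have "l2_inner (\<lambda>x. AH g x + \<i> * AD g x) v = 0"
      unfolding AH_plus_iAD using v g(1) by (simp add: ip_scale_left)
    ultimately show "l2_inner h v = l2_inner f (\<lambda>x. \<i> * v x)" by (simp add: ip_scale_right eq_neg_iff_add_eq_0)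
  qed
  then show "v \<in> defect_space S \<i>" unfolding defect_space_def by simp
qed

lemma G0_csub: "csub G0"
  unfolding csub_def
proof (intro conjI allI ballI impI)
  show "G0 \<subseteq> L2" using G0_L2 by blast
  show "(\<lambda>x. 0) \<in> G0" unfolding G0_def using S_zero L2_zero by (simp add: AD_def AH_def)
  fix f g assume "f \<in> G0" "g \<in> G0"
  then show "(\<lambda>x. f x + g x) \<in> G0" unfolding G0_def
    using S_add[of "AD f" "AH f" "AD g" "AH g"] L2_add by (auto simp: AD_add AH_add)
next
  fix c f assume "f \<in> G0"
  then show "(\<lambda>x. c * f x) \<in> G0" unfolding G0_def
    using S_scale[of "AD f" "AH f" c] L2_scale by (auto simp: AD_scale AH_scale)
next
  fix fs f assume a: "(\<forall>n. fs n \<in> G0) \<and> f \<in> L2 \<and> l2_conv fs f"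
  then have fsL: "\<And>n. fs n \<in> L2" using G0_L2 by blast
  have c: "l2_conv (\<lambda>n. AD (fs n)) (AD f)" "l2_conv (\<lambda>n. AH (fs n)) (AH f)"
    using AD_conv[OF fsL, of f] a by auto
  have m: "\<forall>n. (AD (fs n), AH (fs n)) \<in> S" using a G0_S by blast
  have "(AD f, AH f) \<in> S"
    using clo[unfolded closed_op_def, rule_format, of "\<lambda>n. AD (fs n)" "\<lambda>n. AH (fs n)" "AD f" "AH f"]
      m c AD_L2 AH_L2 a by blast
  then show "f \<in> G0" using a unfolding G0_def by simp
qed

lemma G0_aeq: assumes "g \<in> G0" "g' \<in> L2" "aeq g g'" shows "g' \<in> G0"
proof -
  have gL: "g \<in> L2" using G0_L2[OF assms(1)] .
  have dd: "aeq (Dil g) (Dil g')" using aeq_Dpow[OF gL assms(2,3), of 1] by (simp add: Dil_Dpow)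
  have "aeq (AD g) (AD g')" unfolding AD_def using aeq_cong_add[OF dd aeq_cong_scale[OF assms(3), of "-1"]] by simp
  moreover have "aeq (AH g) (AH g')" unfolding AH_def using aeq_cong_scale[OF aeq_cong_add[OF dd assms(3)]] by simp
  ultimately have "(AD g', AH g') \<in> S" using S_aeq[OF G0_S[OF assms(1)] AD_L2[OF assms(2)] AH_L2[OF assms(2)]] by blast
  then show ?thesis using assms(2) by (simp add: G0_def)
qed

lemma dense_zero: assumes z: "z \<in> L2" and orth: "\<And>f. f \<in> Domain S \<Longrightarrow> l2_inner f z = 0"
  shows "aeq z (\<lambda>x. 0)"
proof -
  have "l2_norm z \<le> 0"
  proof (rule ccontr)
    assume "\<not> l2_norm z \<le> 0"
    then have zp: "l2_norm z > 0" by simp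
    obtain f where f: "f \<in> Domain S" "l2_norm (\<lambda>x. f x - z x) < l2_norm z"
      using dense zp z unfolding densely_defined_def by blast
    have fL: "f \<in> L2" using f(1) S_L2 by blast
    have "l2_inner z z = l2_inner z z - l2_inner f z" using orth[OF f(1)] by simp
    also have "\<dots> = - l2_inner (\<lambda>x. f x - z x) z" using ip_diff_left[OF fL z z] by simp
    finally have "cmod (l2_inner z z) \<le> l2_norm (\<lambda>x. f x - z x) * l2_norm z"
      using CS[OF L2_diff[OF fL z] z] by simp
    also have "\<dots> < l2_norm z * l2_norm z" using f(2) zp by (intro mult_strict_right_mono) auto
    finally show False using ip_self[OF z] by (simp add: power2_eq_square norm_mult abs_of_nonneg)
  qed
  then have "l2_norm z = 0" using l2_norm_nonneg[of z] by linarith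
  then show ?thesis using l2_norm_zero_iff[OF z] by simp
qed

lemma G0_eq: "G0 = {y \<in> L2. \<forall>v\<in>defect_space S (- \<i>). l2_inner y v = 0}"
proof
  show "G0 \<subseteq> {y \<in> L2. \<forall>v\<in>defect_space S (- \<i>). l2_inner y v = 0}"
    using N_minus_iff G0_L2 by blast
next
  show "{y \<in> L2. \<forall>v\<in>defect_space S (- \<i>). l2_inner y v = 0} \<subseteq> G0"
  proof
    fix y assume y: "y \<in> {y \<in> L2. \<forall>v\<in>defect_space S (- \<i>). l2_inner y v = 0}"
    then have yL: "y \<in> L2" by simp
    obtain y0 where y0: "y0 \<in> G0" "\<forall>w\<in>G0. l2_inner w (\<lambda>x. y x - y0 x) = 0"
      using projection[OF G0_csub yL] by blast
    have y0L: "y0 \<in> L2" using G0_L2[OF y0(1)] .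
    define y1 where "y1 x = y x - y0 x" for x
    have y1L: "y1 \<in> L2" unfolding y1_def[abs_def] using L2_diff[OF yL y0L] .
    have "y1 \<in> defect_space S (- \<i>)" using N_minus_iff y1L y0(2) unfolding y1_def[abs_def] by blast
    then have "l2_inner y y1 = 0" using y by simp
    moreover have "l2_inner y0 y1 = 0" using y0 unfolding y1_def[abs_def] by blast
    ultimately have "l2_inner y1 y1 = 0" unfolding y1_def[abs_def]
      using ip_diff_left[OF yL y0L y1L] unfolding y1_def[abs_def] by simp
    then have "aeq y1 (\<lambda>x. 0)" by (rule ip_self_zero[OF y1L])
    then have "aeq y0 y" unfolding y1_def aeq_def by eventually_elim simp
    then show "y \<in> G0" using G0_aeq[OF y0(1) yL] by blast
  qed
qed

end


lemma expansion_step: assumes gL: "g \<in> L2" and hL: "h \<in> L2" and vL: "v \<in> L2"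
  and eq: "aeq g (\<lambda>x. Q * h x - Q * Dil g x)"
  shows "l2_inner (Dpow (int N) g) v = Q * l2_inner (Dpow (int N) h) v - Q * l2_inner (Dpow (int (Suc N)) g) v"
proof -
  have rL: "(\<lambda>x. Q * h x - Q * Dil g x) \<in> L2" by (intro L2_diff L2_scale hL Dil_L2 gL)
  have a: "aeq (Dpow (int N) g) (Dpow (int N) (\<lambda>x. Q * h x - Q * Dil g x))"
    by (rule aeq_Dpow[OF gL rL eq])
  have e: "Dpow (int N) (\<lambda>x. Q * h x - Q * Dil g x) = (\<lambda>x. Q * Dpow (int N) h x - Q * Dpow (int (Suc N)) g x)"
    by (simp add: Dpow_diff Dpow_scale Dil_Dpow Dpow_Dpow add.commute)
  have L1: "Dpow (int N) h \<in> L2" "Dpow (int (Suc N)) g \<in> L2" using Dpow_L2 hL gL by auto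
  have "l2_inner (Dpow (int N) g) v = l2_inner (\<lambda>x. Q * Dpow (int N) h x - Q * Dpow (int (Suc N)) g x) v"
    using ip_aeq_left[OF Dpow_L2[OF gL] Dpow_L2[OF rL] vL a] e by simp
  also have "\<dots> = Q * l2_inner (Dpow (int N) h) v - Q * l2_inner (Dpow (int (Suc N)) g) v"
    using ip_diff_left[OF L2_scale[OF L1(1)] L2_scale[OF L1(2)] vL] by (simp add: ip_scale_left)
  finally show ?thesis .
qed

lemma expansion: assumes gL: "g \<in> L2" and hL: "h \<in> L2" and vL: "v \<in> L2"
  and eq: "aeq g (\<lambda>x. Q * h x - Q * Dil g x)"
  shows "l2_inner g v = Q * (\<Sum>n<N. (- Q)^n * l2_inner (Dpow (int n) h) v) + (- Q)^N * l2_inner (Dpow (int N) g) v"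
proof (induction N)
  case 0 then show ?case by simp
next
  case (Suc N)
  have "(- Q)^N * l2_inner (Dpow (int N) g) v = Q * ((- Q)^N * l2_inner (Dpow (int N) h) v) + (- Q)^(Suc N) * l2_inner (Dpow (int (Suc N)) g) v"
  proof -
    have st: "l2_inner (Dpow (int N) g) v = Q * l2_inner (Dpow (int N) h) v - Q * l2_inner (Dpow (int (Suc N)) g) v"
      by (rule expansion_step[OF gL hL vL eq])
    show ?thesis unfolding st by (simp add: algebra_simps power_Suc)
  qed
  then show ?case using Suc.IH by (simp add: algebra_simps)
qed

lemma g_norm_bound: assumes gL: "g \<in> L2" and hL: "h \<in> L2" and q: "0 \<le> q"
  and eq: "aeq g (\<lambda>x. complex_of_real q * h x - complex_of_real q * Dil g x)"
  shows "l2_norm g \<le> q * l2_norm h + q * l2_norm g"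
proof -
  have rL: "(\<lambda>x. complex_of_real q * h x - complex_of_real q * Dil g x) \<in> L2" by (intro L2_diff L2_scale hL Dil_L2 gL)
  have "l2_norm g = l2_norm (\<lambda>x. complex_of_real q * h x - complex_of_real q * Dil g x)"
    by (rule l2_norm_aeq[OF gL rL eq])
  also have "\<dots> \<le> l2_norm (\<lambda>x. complex_of_real q * h x) + l2_norm (\<lambda>x. complex_of_real q * Dil g x)"
    by (rule l2_norm_diff_bound) (intro L2_scale hL Dil_L2 gL)+
  also have "\<dots> = q * l2_norm h + q * l2_norm g" using q by (simp add: l2_norm_scale l2_norm_Dil[OF gL])
  finally show ?thesis .
qed

locale PSOc = PSO +
  assumes chf: "\<And>\<mu> f. Im \<mu> > 0 \<Longrightarrow> f \<in> defect_space S \<i> \<Longrightarrow>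
     \<exists>s hm. s \<in> Domain S \<and> hm \<in> defect_space S \<mu> \<and> aeq f (\<lambda>x. s x + hm x)"
begin

lemma exists_g: assumes h: "h \<in> defect_space S \<i>" and q: "0 < q" "q < 1"
  shows "\<exists>g\<in>G0. aeq g (\<lambda>x. complex_of_real q * h x - complex_of_real q * Dil g x)"
proof -
  define c :: real where "c = (1 - q) / (1 + q)"
  define \<mu> where "\<mu> = \<i> * complex_of_real c"
  have c0: "c > 0" using q by (simp add: c_def)
  have "Im \<mu> > 0" using c0 by (simp add: \<mu>_def)
  then obtain s hm where s: "s \<in> Domain S" and hm: "hm \<in> defect_space S \<mu>" and shm: "aeq h (\<lambda>x. s x + hm x)"
    using chf h by blast
  obtain t where st: "(s, t) \<in> S" using s by blast
  obtain g where g: "g \<in> G0" "aeq s (AD g)" "aeq t (AH g)" using S_param[OF st] by blast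
  have gL: "g \<in> L2" using G0_L2[OF g(1)] .
  have hL: "h \<in> L2" using defect_L2[OF h] .
  have hmL: "hm \<in> L2" using defect_L2[OF hm] .
  have sL: "s \<in> L2" and tL: "t \<in> L2" using S_L2[OF st] by auto
  have adj_hm: "(hm, (\<lambda>x. \<mu> * hm x)) \<in> adjoint_op S" using hm unfolding defect_space_def by simp
  have adj_h: "(h, (\<lambda>x. \<i> * h x)) \<in> adjoint_op S" using h unfolding defect_space_def by simp
  have adj_s: "(s, t) \<in> adjoint_op S" using sym st unfolding symmetric_op_def by blast
  have hm_eq: "aeq hm (\<lambda>x. h x - s x)" using shm unfolding aeq_def by eventually_elim simp
  define z where "z x = \<i> * h x - t x - \<mu> * hm x" for x
  have zL: "z \<in> L2" unfolding z_def[abs_def] by (intro L2_diff L2_scale hL tL hmL)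
  have "aeq z (\<lambda>x. 0)"
  proof (rule dense_zero[OF zL])
    fix f assume "f \<in> Domain S"
    then obtain h' where fh: "(f, h') \<in> S" by blast
    have fL: "f \<in> L2" and h'L: "h' \<in> L2" using S_L2[OF fh] by auto
    have e1: "l2_inner h' hm = l2_inner f (\<lambda>x. \<mu> * hm x)" by (rule adjD[OF adj_hm fh])
    have e2: "l2_inner h' h = l2_inner f (\<lambda>x. \<i> * h x)" by (rule adjD[OF adj_h fh])
    have e3: "l2_inner h' s = l2_inner f t" by (rule adjD[OF adj_s fh])
    have e4: "l2_inner h' hm = l2_inner h' h - l2_inner h' s"
      using ip_aeq_right[OF hmL L2_diff[OF hL sL] h'L hm_eq] ip_diff_right[OF hL sL h'L] by simp
    have "l2_inner f z = l2_inner f (\<lambda>x. \<i> * h x) - l2_inner f t - l2_inner f (\<lambda>x. \<mu> * hm x)"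
      unfolding z_def[abs_def]
      using ip_diff_right[OF L2_diff[OF L2_scale[OF hL] tL] L2_scale[OF hmL] fL]
        ip_diff_right[OF L2_scale[OF hL] tL fL] by simp
    then show "l2_inner f z = 0" using e1 e2 e3 e4 by simp
  qed
  then have "AE x in lborel. complex_of_real q * h x - complex_of_real q * Dil g x = g x"
    using hm_eq g(2) g(3) unfolding aeq_def
  proof (eventually_elim)
    case (elim x)
    from elim have E: "\<i> * h x - \<i> * (Dil g x + g x) - \<mu> * (h x - (Dil g x - g x)) = 0"
      unfolding z_def AD_def AH_def by simp
    have "\<i> * (h x - (Dil g x + g x) - complex_of_real c * (h x - (Dil g x - g x))) = 0"
      using E unfolding \<mu>_def by (simp add: algebra_simps)
    then have E1: "h x - (Dil g x + g x) - complex_of_real c * (h x - (Dil g x - g x)) = 0" by simp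
    have "(1 - complex_of_real c) * (h x - Dil g x) - (1 + complex_of_real c) * g x
        = h x - (Dil g x + g x) - complex_of_real c * (h x - (Dil g x - g x))"
      by (simp add: algebra_simps)
    with E1 have E2: "(1 - complex_of_real c) * (h x - Dil g x) = (1 + complex_of_real c) * g x"
      by simp
    have nz: "1 + complex_of_real c \<noteq> 0"
    proof
      assume "1 + complex_of_real c = 0"
      then have "complex_of_real (1 + c) = 0" by simp
      then show False using c0 by (simp only: of_real_eq_0_iff)
    qed
    have qc: "complex_of_real q = (1 - complex_of_real c) / (1 + complex_of_real c)"
    proof -
      have "1 + c = 2 / (1 + q)" using q by (simp add: c_def field_simps)
      moreover have "1 - c = 2 * q / (1 + q)" using q by (simp add: c_def field_simps)
      ultimately have "(1 - c) / (1 + c) = (2 * q / (1 + q)) / (2 / (1 + q))" by simp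
      also have "\<dots> = q" using q by (simp add: field_simps)
      finally have "(1 - c) / (1 + c) = q" .
      then have "complex_of_real ((1 - c) / (1 + c)) = complex_of_real q" by simp
      then show ?thesis by simp
    qed
    have "g x = ((1 + complex_of_real c) * g x) / (1 + complex_of_real c)" using nz by simp
    also have "\<dots> = (1 - complex_of_real c) / (1 + complex_of_real c) * (h x - Dil g x)"
      using E2 by simp
    finally have "g x = complex_of_real q * (h x - Dil g x)" using qc by simp
    then show ?case using qc by (simp add: right_diff_distrib)
  qed
  then have "aeq g (\<lambda>x. complex_of_real q * h x - complex_of_real q * Dil g x)"
    unfolding aeq_def by eventually_elim simp
  with g(1) show ?thesis by blast
qed

lemma ortho_h: assumes h: "h \<in> defect_space S \<i>" and v: "v \<in> defect_space S (- \<i>)"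
  shows "l2_inner (Dpow (int n) h) v = 0"
proof (induction n rule: less_induct)
  case (less n)
  have hL: "h \<in> L2" using defect_L2[OF h] .
  have vL: "v \<in> L2" using defect_L2[OF v] .
  define a where "a = l2_inner (Dpow (int n) h) v"
  define B where "B = 2 * l2_norm h * l2_norm v"
  have bound: "cmod a \<le> q * B" if q: "0 < q" "q \<le> 1/2" for q :: real
  proof -
    obtain g where g: "g \<in> G0" "aeq g (\<lambda>x. complex_of_real q * h x - complex_of_real q * Dil g x)"
      using exists_g[OF h, of q] q by auto
    have gL: "g \<in> L2" using G0_L2[OF g(1)] .
    have g0: "l2_inner g v = 0" using N_minus_iff v g(1) by blast
    define Q where "Q = complex_of_real q"
    define X where "X = l2_inner (Dpow (int (Suc n)) g) v"
    have "l2_inner g v = Q * (\<Sum>m<Suc n. (- Q)^m * l2_inner (Dpow (int m) h) v) + (- Q)^(Suc n) * X"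
      unfolding X_def Q_def by (rule expansion[OF gL hL vL g(2)])
    also have "(\<Sum>m<Suc n. (- Q)^m * l2_inner (Dpow (int m) h) v) = (- Q)^n * a"
      using less.IH by (simp add: a_def)
    finally have "0 = Q * (- Q)^n * a - Q * (- Q)^n * X" using g0 by (simp add: algebra_simps)
    moreover have "Q * (- Q)^n \<noteq> 0" using q by (simp add: Q_def)
    ultimately have aX: "a = X" by (simp add: right_diff_distrib[symmetric])
    have "cmod X \<le> l2_norm (Dpow (int (Suc n)) g) * l2_norm v"
      unfolding X_def by (rule CS[OF Dpow_L2[OF gL] vL])
    also have "\<dots> = l2_norm g * l2_norm v" using l2_norm_Dpow[OF gL] by simp
    also have "l2_norm g \<le> 2 * q * l2_norm h"
    proof -
      have "l2_norm g \<le> q * l2_norm h + q * l2_norm g" using g_norm_bound[OF gL hL _ g(2)] q by simp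
      then have "(1 - q) * l2_norm g \<le> q * l2_norm h" by (simp add: algebra_simps)
      moreover have "(1/2) * l2_norm g \<le> (1 - q) * l2_norm g" using q by (intro mult_right_mono) auto
      ultimately show ?thesis by linarith
    qed
    then have "l2_norm g * l2_norm v \<le> (2 * q * l2_norm h) * l2_norm v" by (intro mult_right_mono) auto
    finally show "cmod a \<le> q * B" using aX by (simp add: B_def mult_ac)
  qed
  have "cmod a = 0"
  proof (rule ccontr)
    assume "cmod a \<noteq> 0"
    then have ap: "cmod a > 0" by simp
    define q where "q = min (1/2) (cmod a / (2 * (B + 1)))"
    have B0: "B \<ge> 0" by (simp add: B_def)
    have q1: "0 < q" using ap B0 by (simp add: q_def)
    have q2: "q \<le> 1/2" unfolding q_def by (rule min.cobounded1)
    note q = q1 q2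
    have "q * B \<le> (cmod a / (2 * (B + 1))) * B" using B0 unfolding q_def by (intro mult_right_mono min.cobounded2) auto
    also have "\<dots> < cmod a"
    proof -
      have "cmod a * B < cmod a * (2 * (B + 1))" using ap B0 by (intro mult_strict_left_mono) auto
      then show ?thesis using B0 by (simp add: field_simps)
    qed
    finally show False using bound[OF q] by simp
  qed
  then show ?case by (simp add: a_def)
qed

lemma ortho_defect: assumes u: "u \<in> defect_space S (- \<i>)" and v: "v \<in> defect_space S (- \<i>)"
  shows "l2_inner (Dpow (int (Suc n)) u) v = 0"
proof -
  have uL: "u \<in> L2" using defect_L2[OF u] .
  have h: "Dil u \<in> defect_space S \<i>"
    unfolding N_plus_iff using Dil_L2[OF uL] ip_Dil[OF G0_L2 uL] N_minus_iff u by auto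
  have "Dpow (int n) (Dil u) = Dpow (int (Suc n)) u" by (simp add: Dil_Dpow Dpow_Dpow add.commute)
  then show ?thesis using ortho_h[OF h v, of n] by simp
qed

end


lemma ip_sum_right: assumes "f \<in> L2" "\<And>k. k \<in> F \<Longrightarrow> e k \<in> L2"
  shows "l2_inner f (\<lambda>x. \<Sum>k\<in>F. c k * e k x) = (\<Sum>k\<in>F. cnj (c k) * l2_inner f (e k))"
  using assms(2)
proof (induction F rule: infinite_finite_induct)
  case (infinite A) then show ?case by simp
next
  case empty then show ?case by simp
next
  case (insert a A)
  have "l2_inner f (\<lambda>x. \<Sum>k\<in>insert a A. c k * e k x) = l2_inner f (\<lambda>x. c a * e a x + (\<Sum>k\<in>A. c k * e k x))"
    using insert by simp
  also have "\<dots> = l2_inner f (\<lambda>x. c a * e a x) + l2_inner f (\<lambda>x. \<Sum>k\<in>A. c k * e k x)"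
    by (rule ip_add_right[OF L2_scale L2_sum assms(1)]) (use insert in auto)
  finally show ?case using insert by (simp add: ip_scale_right)
qed

lemma orth_approx: assumes fL: "f \<in> L2" and vL: "v \<in> L2"
  and ap: "\<And>\<epsilon>. \<epsilon> > 0 \<Longrightarrow> \<exists>w. w \<in> L2 \<and> l2_inner f w = 0 \<and> l2_norm (\<lambda>x. v x - w x) < \<epsilon>"
  shows "l2_inner f v = 0"
proof (rule ccontr)
  assume ne: "l2_inner f v \<noteq> 0"
  have "l2_norm f \<noteq> 0"
  proof
    assume "l2_norm f = 0"
    then have "cmod (l2_inner f v) \<le> 0" using CS[OF fL vL] by simp
    then show False using ne by simp
  qed
  then have fp: "l2_norm f > 0" using l2_norm_nonneg[of f] by linarith
  define \<epsilon> where "\<epsilon> = cmod (l2_inner f v) / (l2_norm f + 1)"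
  have ep: "\<epsilon> > 0" using ne fp by (simp add: \<epsilon>_def add_pos_nonneg)
  obtain w where w: "w \<in> L2" "l2_inner f w = 0" "l2_norm (\<lambda>x. v x - w x) < \<epsilon>" using ap[OF ep] by blast
  have "l2_inner f v = l2_inner f (\<lambda>x. v x - w x)" using ip_diff_right[OF vL w(1) fL] w(2) by simp
  then have "cmod (l2_inner f v) \<le> l2_norm f * l2_norm (\<lambda>x. v x - w x)"
    using CS[OF fL L2_diff[OF vL w(1)]] by simp
  also have "\<dots> \<le> l2_norm f * \<epsilon>" using w(3) by (intro mult_left_mono) auto
  also have "\<dots> < cmod (l2_inner f v)"
  proof -
    have "l2_norm f * cmod (l2_inner f v) < (l2_norm f + 1) * cmod (l2_inner f v)" using ne by simp
    then show ?thesis unfolding \<epsilon>_def using fp by (simp add: field_simps add_pos_nonneg)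
  qed
  finally show False by simp
qed

lemma sum_extend: fixes e :: "'k \<Rightarrow> real \<Rightarrow> complex" assumes "finite T" "F \<subseteq> T"
  shows "(\<Sum>p\<in>T. (if p \<in> F then c p else 0) * e p x) = (\<Sum>p\<in>F. c p * e p x)"
proof -
  have "(\<Sum>p\<in>T. (if p \<in> F then c p else 0) * e p x) = (\<Sum>p\<in>F. (if p \<in> F then c p else 0) * e p x)"
    by (rule sum.mono_neutral_right[OF assms]) auto
  also have "\<dots> = (\<Sum>p\<in>F. c p * e p x)" by (rule sum.cong) auto
  finally show ?thesis .
qed

definition spanc :: "('k \<Rightarrow> cfun) \<Rightarrow> cfun set" where
  "spanc e = {f \<in> L2. \<forall>\<epsilon>>0. \<exists>F c. finite F \<and> l2_norm (\<lambda>x. f x - (\<Sum>k\<in>F. c k * e k x)) < \<epsilon>}"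

lemma spanc_csub: assumes eL: "\<And>k. e k \<in> L2" shows "csub (spanc e)"
  unfolding csub_def
proof (intro conjI allI ballI impI)
  have sL: "\<And>F c. (\<lambda>x. \<Sum>k\<in>F. c k * e k x) \<in> L2" by (rule L2_sum, rule eL)
  show "spanc e \<subseteq> L2" unfolding spanc_def by blast
  show "(\<lambda>x. 0) \<in> spanc e" unfolding spanc_def
  proof (intro CollectI conjI allI impI L2_zero)
    fix \<epsilon> :: real assume "\<epsilon> > 0"
    then show "\<exists>F c. finite F \<and> l2_norm (\<lambda>x. 0 - (\<Sum>k\<in>F. c k * e k x)) < \<epsilon>"
      by (intro exI[of _ "{}"] exI[of _ "\<lambda>_. 0"]) (simp add: l2_norm_def)
  qed
next
  have sL: "\<And>F c. (\<lambda>x. \<Sum>k\<in>F. c k * e k x) \<in> L2" by (rule L2_sum, rule eL)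
  fix f g assume f: "f \<in> spanc e" and g: "g \<in> spanc e"
  have fL: "f \<in> L2" and gL: "g \<in> L2" using f g by (auto simp: spanc_def)
  show "(\<lambda>x. f x + g x) \<in> spanc e" unfolding spanc_def
  proof (intro CollectI conjI allI impI L2_add fL gL)
    fix \<epsilon> :: real assume ep: "\<epsilon> > 0"
    have fa: "\<And>\<delta>. \<delta> > 0 \<Longrightarrow> \<exists>F c. finite F \<and> l2_norm (\<lambda>x. f x - (\<Sum>k\<in>F. c k * e k x)) < \<delta>"
      using f unfolding spanc_def by blast
    have ga: "\<And>\<delta>. \<delta> > 0 \<Longrightarrow> \<exists>F c. finite F \<and> l2_norm (\<lambda>x. g x - (\<Sum>k\<in>F. c k * e k x)) < \<delta>"
      using g unfolding spanc_def by blast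
    have ep2: "\<epsilon>/2 > 0" using ep by simp
    obtain F1 c1 where 1: "finite F1" "l2_norm (\<lambda>x. f x - (\<Sum>k\<in>F1. c1 k * e k x)) < \<epsilon>/2"
      using fa[OF ep2] by blast
    obtain F2 c2 where 2: "finite F2" "l2_norm (\<lambda>x. g x - (\<Sum>k\<in>F2. c2 k * e k x)) < \<epsilon>/2"
      using ga[OF ep2] by blast
    define c where "c p = (if p \<in> F1 then c1 p else 0) + (if p \<in> F2 then c2 p else 0)" for p
    have fin: "finite (F1 \<union> F2)" using 1 2 by simp
    have sum_eq: "(\<Sum>k\<in>F1 \<union> F2. c k * e k x) = (\<Sum>k\<in>F1. c1 k * e k x) + (\<Sum>k\<in>F2. c2 k * e k x)" for x
      unfolding c_def distrib_right sum.distrib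
      using sum_extend[OF fin, of F1 c1 e x] sum_extend[OF fin, of F2 c2 e x] by simp
    have "l2_norm (\<lambda>x. f x + g x - (\<Sum>k\<in>F1 \<union> F2. c k * e k x))
        = l2_norm (\<lambda>x. (f x - (\<Sum>k\<in>F1. c1 k * e k x)) + (g x - (\<Sum>k\<in>F2. c2 k * e k x)))"
      unfolding sum_eq by (simp add: algebra_simps)
    also have "\<dots> \<le> l2_norm (\<lambda>x. f x - (\<Sum>k\<in>F1. c1 k * e k x)) + l2_norm (\<lambda>x. g x - (\<Sum>k\<in>F2. c2 k * e k x))"
      by (rule l2_norm_triangle) (intro L2_diff fL gL sL)+
    also have "\<dots> < \<epsilon>" using 1 2 by simp
    finally have X: "l2_norm (\<lambda>x. f x + g x - (\<Sum>k\<in>F1 \<union> F2. c k * e k x)) < \<epsilon>" .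
    show "\<exists>F c. finite F \<and> l2_norm (\<lambda>x. f x + g x - (\<Sum>k\<in>F. c k * e k x)) < \<epsilon>"
      using fin X by (intro exI[of _ "F1 \<union> F2"] exI[of _ c]) simp
  qed
next
  have sL: "\<And>F c. (\<lambda>x. \<Sum>k\<in>F. c k * e k x) \<in> L2" by (rule L2_sum, rule eL)
  fix a f assume f: "f \<in> spanc e"
  have fL: "f \<in> L2" using f by (auto simp: spanc_def)
  show "(\<lambda>x. a * f x) \<in> spanc e" unfolding spanc_def
  proof (intro CollectI conjI allI impI L2_scale fL)
    fix \<epsilon> :: real assume ep: "\<epsilon> > 0"
    have a1: "cmod a + 1 > 0" using norm_ge_zero[of a] by linarith
    have ep': "\<epsilon> / (cmod a + 1) > 0" using ep a1 by (rule divide_pos_pos)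
    have fa: "\<And>\<delta>. \<delta> > 0 \<Longrightarrow> \<exists>F c. finite F \<and> l2_norm (\<lambda>x. f x - (\<Sum>k\<in>F. c k * e k x)) < \<delta>"
      using f unfolding spanc_def by blast
    obtain F c where 1: "finite F" "l2_norm (\<lambda>x. f x - (\<Sum>k\<in>F. c k * e k x)) < \<epsilon> / (cmod a + 1)"
      using fa[OF ep'] by blast
    have "l2_norm (\<lambda>x. a * f x - (\<Sum>k\<in>F. (a * c k) * e k x)) = cmod a * l2_norm (\<lambda>x. f x - (\<Sum>k\<in>F. c k * e k x))"
      by (simp add: l2_norm_scale[symmetric] sum_distrib_left right_diff_distrib mult.assoc)
    also have "\<dots> \<le> (cmod a + 1) * l2_norm (\<lambda>x. f x - (\<Sum>k\<in>F. c k * e k x))"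
      by (intro mult_right_mono) auto
    also have "\<dots> < (cmod a + 1) * (\<epsilon> / (cmod a + 1))"
      using 1(2) a1 by (intro mult_strict_left_mono) auto
    also have "\<dots> = \<epsilon>" using a1 by simp
    finally have X: "l2_norm (\<lambda>x. a * f x - (\<Sum>k\<in>F. (a * c k) * e k x)) < \<epsilon>" .
    show "\<exists>F c. finite F \<and> l2_norm (\<lambda>x. a * f x - (\<Sum>k\<in>F. c k * e k x)) < \<epsilon>"
      using 1(1) X by (intro exI[of _ F] exI[of _ "\<lambda>k. a * c k"]) simp
  qed
next
  have sL: "\<And>F c. (\<lambda>x. \<Sum>k\<in>F. c k * e k x) \<in> L2" by (rule L2_sum, rule eL)
  fix fs f assume a: "(\<forall>n. fs n \<in> spanc e) \<and> f \<in> L2 \<and> l2_conv fs f"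
  have fsL: "\<And>n. fs n \<in> L2" using a by (auto simp: spanc_def)
  show "f \<in> spanc e" unfolding spanc_def
  proof (intro CollectI conjI allI impI)
    show "f \<in> L2" using a by simp
    fix \<epsilon> :: real assume ep: "\<epsilon> > 0"
    have ep2: "\<epsilon>/2 > 0" using ep by simp
    obtain N where N: "\<forall>n\<ge>N. norm (l2_norm (\<lambda>x. fs n x - f x) - 0) < \<epsilon>/2"
      using LIMSEQ_D[OF a[THEN conjunct2, THEN conjunct2, unfolded l2_conv_def] ep2] by blast
    define n where "n = N"
    have n: "l2_norm (\<lambda>x. fs n x - f x) < \<epsilon>/2" using N by (simp add: n_def)
    have fa: "\<And>\<delta>. \<delta> > 0 \<Longrightarrow> \<exists>F c. finite F \<and> l2_norm (\<lambda>x. fs n x - (\<Sum>k\<in>F. c k * e k x)) < \<delta>"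
      using a unfolding spanc_def by blast
    obtain F c where 1: "finite F" "l2_norm (\<lambda>x. fs n x - (\<Sum>k\<in>F. c k * e k x)) < \<epsilon>/2"
      using fa[OF ep2] by blast
    have "l2_norm (\<lambda>x. f x - (\<Sum>k\<in>F. c k * e k x)) \<le> l2_norm (\<lambda>x. f x - fs n x) + l2_norm (\<lambda>x. fs n x - (\<Sum>k\<in>F. c k * e k x))"
      by (rule l2_norm_triangle_diff) (use a fsL sL in auto)
    also have "\<dots> < \<epsilon>" using n 1 l2_norm_diff_commute[of f "fs n"] by simp
    finally have X: "l2_norm (\<lambda>x. f x - (\<Sum>k\<in>F. c k * e k x)) < \<epsilon>" .
    show "\<exists>F c. finite F \<and> l2_norm (\<lambda>x. f x - (\<Sum>k\<in>F. c k * e k x)) < \<epsilon>"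
      using 1(1) X by (intro exI[of _ F] exI[of _ c]) simp
  qed
qed

lemma spanc_mem: assumes "\<And>k. e k \<in> L2" shows "e p \<in> spanc e"
  unfolding spanc_def
proof (intro CollectI conjI allI impI assms)
  fix \<epsilon> :: real assume "\<epsilon> > 0"
  then show "\<exists>F c. finite F \<and> l2_norm (\<lambda>x. e p x - (\<Sum>k\<in>F. c k * e k x)) < \<epsilon>"
    by (intro exI[of _ "{p}"] exI[of _ "\<lambda>_. 1"]) (simp add: l2_norm_def)
qed


lemma ip_Dpow_shift: assumes "a \<in> L2" "b \<in> L2" "j' \<le> j"
  shows "l2_inner (Dpow j a) (Dpow j' b) = l2_inner (Dpow (j - j') a) b"
proof -
  have "Dpow j a = Dpow j' (Dpow (j - j') a)" by (simp add: Dpow_Dpow)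
  then show ?thesis using ip_Dpow[OF Dpow_L2[OF assms(1)] assms(2), of j' "j - j'"] by simp
qed


lemma l2_orth_L2: "w \<in> l2_orth M \<Longrightarrow> w \<in> L2" by (simp add: l2_orth_def)

lemma l2_orth_add: assumes "M \<subseteq> L2" "a \<in> l2_orth M" "b \<in> l2_orth M" shows "(\<lambda>x. a x + b x) \<in> l2_orth M"
  using assms unfolding l2_orth_def by (auto intro!: L2_add simp: ip_add_right subsetD)

lemma l2_orth_scale: assumes "a \<in> l2_orth M" shows "(\<lambda>x. c * a x) \<in> l2_orth M"
  using assms unfolding l2_orth_def by (auto intro!: L2_scale simp: ip_scale_right)

lemma l2_orth_diff: assumes "M \<subseteq> L2" "a \<in> l2_orth M" "b \<in> l2_orth M" shows "(\<lambda>x. a x - b x) \<in> l2_orth M"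
  using l2_orth_add[OF assms(1,2) l2_orth_scale[OF assms(3), of "-1"]] by simp

locale PSOw = PSOc +
  fixes \<psi> :: cfun
  assumes simple: "simple_op S"
    and onb: "onb_family (defect_space S (- \<i>)) (UNIV :: int set) (\<lambda>k. Tpow k \<psi>)"
begin

definition E :: "int \<times> int \<Rightarrow> cfun" where "E p = Dpow (fst p) (Tpow (snd p) \<psi>)"

lemma T_N: "Tpow k \<psi> \<in> defect_space S (- \<i>)" using onb unfolding onb_family_def by blast
lemma T_L2: "Tpow k \<psi> \<in> L2" using defect_L2[OF T_N] .
lemma T_on: "l2_inner (Tpow k \<psi>) (Tpow l \<psi>) = (if k = l then 1 else 0)"
  using onb unfolding onb_family_def by blast
lemma T_dense: "g \<in> defect_space S (- \<i>) \<Longrightarrow> \<epsilon> > 0 \<Longrightarrow>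
   \<exists>F c. finite F \<and> l2_norm (\<lambda>x. g x - (\<Sum>k\<in>F. c k * Tpow k \<psi> x)) < \<epsilon>"
  using onb unfolding onb_family_def by blast
lemma E_L2: "E p \<in> L2" unfolding E_def by (intro Dpow_L2 T_L2)

lemma E_lt: assumes "j' < j" shows "l2_inner (E (j, k)) (E (j', k')) = 0"
proof -
  have "l2_inner (E (j, k)) (E (j', k')) = l2_inner (Dpow (j - j') (Tpow k \<psi>)) (Tpow k' \<psi>)"
    unfolding E_def using ip_Dpow_shift[OF T_L2 T_L2, of j' j] assms by simp
  also have "j - j' = int (Suc (nat (j - j' - 1)))" using assms by simp
  also have "l2_inner (Dpow (int (Suc (nat (j - j' - 1)))) (Tpow k \<psi>)) (Tpow k' \<psi>) = 0"
    by (rule ortho_defect[OF T_N T_N])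
  finally show ?thesis .
qed

lemma E_orth: "l2_inner (E p) (E p') = (if p = p' then 1 else 0)"
proof -
  obtain j k j' k' where p: "p = (j, k)" "p' = (j', k')" by (cases p, cases p') auto
  consider "j' < j" | "j < j'" | "j = j'" by linarith
  then show ?thesis
  proof cases
    case 1 then show ?thesis using E_lt p by simp
  next
    case 2
    have "l2_inner (E p) (E p') = cnj (l2_inner (E (j', k')) (E (j, k)))" unfolding p by (rule ip_cnj)
    then show ?thesis using E_lt[OF 2] p 2 by simp
  next
    case 3
    have "l2_inner (E p) (E p') = l2_inner (Tpow k \<psi>) (Tpow k' \<psi>)"
      unfolding p E_def using 3 ip_Dpow[OF T_L2 T_L2] by simp
    then show ?thesis using T_on p 3 by simp
  qed
qed

definition M :: "cfun set" where "M = {f \<in> L2. \<forall>p. l2_inner (E p) f = 0}"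

lemma M_L2: "f \<in> M \<Longrightarrow> f \<in> L2" by (simp add: M_def)

lemma M_add: "f \<in> M \<Longrightarrow> g \<in> M \<Longrightarrow> (\<lambda>x. f x + g x) \<in> M"
  unfolding M_def by (auto intro!: L2_add simp: ip_add_right E_L2)
lemma M_scale: "f \<in> M \<Longrightarrow> (\<lambda>x. c * f x) \<in> M"
  unfolding M_def by (auto intro!: L2_scale simp: ip_scale_right)
lemma M_diff: "f \<in> M \<Longrightarrow> g \<in> M \<Longrightarrow> (\<lambda>x. f x - g x) \<in> M"
  using M_add[of f "\<lambda>x. (-1) * g x"] M_scale[of g "-1"] by simp

lemma M_closed: "closed_l2_subspace M"
  unfolding closed_l2_subspace_def l2_subspace_def
proof (intro conjI ballI allI impI)
  show "M \<subseteq> L2" using M_L2 by blast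
  show "(\<lambda>x. 0) \<in> M" by (simp add: M_def L2_zero)
  show "\<And>f g. f \<in> M \<Longrightarrow> g \<in> M \<Longrightarrow> (\<lambda>x. f x + g x) \<in> M" by (rule M_add)
  show "\<And>c f. f \<in> M \<Longrightarrow> (\<lambda>x. c * f x) \<in> M" by (rule M_scale)
  fix f g assume f: "f \<in> M" and g: "g \<in> L2" and a: "aeq f g"
  show "g \<in> M" using f g ip_aeq_right[OF M_L2[OF f] g E_L2 a] by (simp add: M_def)
next
  fix fs f assume a: "(\<forall>n. fs n \<in> M) \<and> f \<in> L2 \<and> l2_conv fs f"
  have "\<forall>p. l2_inner (E p) f = 0"
  proof
    fix p
    have fsL: "\<And>n. fs n \<in> L2" using a M_L2 by blast
    have z: "\<And>n. l2_inner (E p) (fs n) = 0" using a unfolding M_def by blast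
    have fL: "f \<in> L2" and c: "l2_conv fs f" using a by auto
    show "l2_inner (E p) f = 0" by (rule orth_limit[OF fsL fL E_L2 c z])
  qed
  then show "f \<in> M" using a by (simp add: M_def)
qed

lemma M_csub: "csub M"
  using M_closed unfolding closed_l2_subspace_def l2_subspace_def csub_def by blast

lemma M_G0: assumes f: "f \<in> M" shows "f \<in> G0"
proof -
  have fL: "f \<in> L2" using M_L2[OF f] .
  have T0: "l2_inner f (Tpow k \<psi>) = 0" for k
  proof -
    have "l2_inner (E (0, k)) f = 0" using f by (simp add: M_def)
    then have "l2_inner (Tpow k \<psi>) f = 0" by (simp add: E_def)
    then show ?thesis by (metis ip_cnj complex_cnj_zero)
  qed
  have "\<forall>v\<in>defect_space S (- \<i>). l2_inner f v = 0"
  proof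
    fix v assume v: "v \<in> defect_space S (- \<i>)"
    show "l2_inner f v = 0"
    proof (rule orth_approx[OF fL defect_L2[OF v]])
      fix \<epsilon> :: real assume "\<epsilon> > 0"
      then obtain F c where F: "finite F" "l2_norm (\<lambda>x. v x - (\<Sum>k\<in>F. c k * Tpow k \<psi> x)) < \<epsilon>"
        using T_dense[OF v] by blast
      have "l2_inner f (\<lambda>x. \<Sum>k\<in>F. c k * Tpow k \<psi> x) = 0"
        using ip_sum_right[OF fL, of F "\<lambda>k. Tpow k \<psi>" c] T_L2 T0 by simp
      then show "\<exists>w. w \<in> L2 \<and> l2_inner f w = 0 \<and> l2_norm (\<lambda>x. v x - w x) < \<epsilon>"
        using F(2) L2_sum[of F "\<lambda>k. Tpow k \<psi>" c] T_L2 by blast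
    qed
  qed
  then show ?thesis using G0_eq fL by blast
qed

lemma M_Dpow: assumes f: "f \<in> M" shows "Dpow m f \<in> M"
proof -
  have fL: "f \<in> L2" using M_L2[OF f] .
  have "l2_inner (E p) (Dpow m f) = 0" for p
  proof -
    obtain j k where p: "p = (j, k)" by (cases p) auto
    have "l2_inner (Dpow m f) (E p) = l2_inner f (Dpow (- m) (E p))" by (rule ip_Dpow_adj[OF fL E_L2])
    also have "Dpow (- m) (E p) = E (j - m, k)" unfolding p E_def by (simp add: Dpow_Dpow)
    also have "l2_inner f (E (j - m, k)) = 0" using f ip_cnj[of f "E (j - m, k)"] by (simp add: M_def)
    finally show ?thesis by (metis ip_cnj complex_cnj_zero)
  qed
  then show ?thesis using Dpow_L2[OF fL] by (simp add: M_def)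
qed

lemma Morth_Dpow: assumes w: "w \<in> l2_orth M" shows "Dpow m w \<in> l2_orth M"
proof -
  have wL: "w \<in> L2" using w by (simp add: l2_orth_def)
  have "l2_inner f (Dpow m w) = 0" if f: "f \<in> M" for f
  proof -
    have "l2_inner (Dpow m w) f = l2_inner w (Dpow (- m) f)" by (rule ip_Dpow_adj[OF wL M_L2[OF f]])
    also have "\<dots> = cnj (l2_inner (Dpow (- m) f) w)" by (rule ip_cnj)
    also have "l2_inner (Dpow (- m) f) w = 0" using w M_Dpow[OF f] by (simp add: l2_orth_def)
    finally show ?thesis by (metis ip_cnj complex_cnj_zero)
  qed
  then show ?thesis using Dpow_L2[OF wL] by (simp add: l2_orth_def)
qed

lemma M_AD: "f \<in> M \<Longrightarrow> AD f \<in> M" unfolding AD_def Dil_Dpow by (intro M_diff M_Dpow)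
lemma M_AH: "f \<in> M \<Longrightarrow> AH f \<in> M" unfolding AH_def Dil_Dpow by (intro M_scale M_add M_Dpow)
lemma M_sub: "M \<subseteq> L2" using M_L2 by blast
lemma Morth_AD: "f \<in> l2_orth M \<Longrightarrow> AD f \<in> l2_orth M"
  unfolding AD_def Dil_Dpow by (intro l2_orth_diff[OF M_sub] Morth_Dpow)
lemma Morth_AH: "f \<in> l2_orth M \<Longrightarrow> AH f \<in> l2_orth M"
  unfolding AH_def Dil_Dpow by (intro l2_orth_scale l2_orth_add[OF M_sub] Morth_Dpow)

lemma M_orth_zero: assumes "x \<in> M" "y \<in> l2_orth M" "aeq x y" shows "aeq x (\<lambda>x. 0)"
proof -
  have xL: "x \<in> L2" using M_L2[OF assms(1)] .
  have yL: "y \<in> L2" using assms(2) by (simp add: l2_orth_def)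
  have "l2_inner x x = l2_inner x y" by (rule ip_aeq_right[OF xL yL xL assms(3)])
  also have "\<dots> = 0" using assms(1,2) by (simp add: l2_orth_def)
  finally show ?thesis by (rule ip_self_zero[OF xL])
qed

lemma reduce_step: assumes ft: "(f, t) \<in> S" and f1: "f1 \<in> M" and f2: "f2 \<in> l2_orth M"
  and ff: "aeq f (\<lambda>x. f1 x + f2 x)"
  shows "\<exists>h1 h2. (f1, h1) \<in> S \<and> h1 \<in> M \<and> (f2, h2) \<in> S \<and> h2 \<in> l2_orth M"
proof -
  obtain g where g: "g \<in> G0" "aeq f (AD g)" "aeq t (AH g)" using S_param[OF ft] by blast
  have gL: "g \<in> L2" using G0_L2[OF g(1)] .
  obtain g1 where g1: "g1 \<in> M" "\<forall>w\<in>M. l2_inner w (\<lambda>x. g x - g1 x) = 0"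
    using projection[OF M_csub gL] by blast
  define g2 where "g2 x = g x - g1 x" for x
  have g1L: "g1 \<in> L2" using M_L2[OF g1(1)] .
  have g2L: "g2 \<in> L2" unfolding g2_def[abs_def] using L2_diff[OF gL g1L] .
  have g2o: "g2 \<in> l2_orth M" using g1(2) g2L unfolding g2_def[abs_def] l2_orth_def by simp
  have g1G: "g1 \<in> G0" by (rule M_G0[OF g1(1)])
  have g2G: "g2 \<in> G0" unfolding g2_def[abs_def] by (rule csub_diff[OF G0_csub g(1) g1G])
  have f1L: "f1 \<in> L2" using M_L2[OF f1] .
  have f2L: "f2 \<in> L2" using f2 by (simp add: l2_orth_def)
  have gsplit: "(\<lambda>x. g1 x + g2 x) = g" by (simp add: g2_def)
  have ADs: "AD g = (\<lambda>x. AD g1 x + AD g2 x)" using AD_add[of g1 g2] gsplit by simp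
  have x_eq: "aeq (\<lambda>x. f1 x - AD g1 x) (\<lambda>x. AD g2 x - f2 x)"
    using ff g(2) unfolding aeq_def ADs
    by (elim AE_mp) (intro AE_I2, simp add: algebra_simps)
  have xM: "(\<lambda>x. f1 x - AD g1 x) \<in> M" by (rule M_diff[OF f1 M_AD[OF g1(1)]])
  have yO: "(\<lambda>x. AD g2 x - f2 x) \<in> l2_orth M" by (rule l2_orth_diff[OF M_sub Morth_AD[OF g2o] f2])
  have z1: "aeq (\<lambda>x. f1 x - AD g1 x) (\<lambda>x. 0)" by (rule M_orth_zero[OF xM yO x_eq])
  have z2: "aeq (\<lambda>x. AD g2 x - f2 x) (\<lambda>x. 0)"
    using aeq_trans[OF aeq_sym[OF x_eq] z1] .
  have e1: "aeq (AD g1) f1" using z1 unfolding aeq_def by eventually_elim simp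
  have e2: "aeq (AD g2) f2" using z2 unfolding aeq_def by eventually_elim simp
  have S1: "(f1, AH g1) \<in> S" using S_aeq[OF G0_S[OF g1G] f1L AH_L2[OF g1L] e1 aeq_refl] .
  have S2: "(f2, AH g2) \<in> S" using S_aeq[OF G0_S[OF g2G] f2L AH_L2[OF g2L] e2 aeq_refl] .
  show "\<exists>h1 h2. (f1, h1) \<in> S \<and> h1 \<in> M \<and> (f2, h2) \<in> S \<and> h2 \<in> l2_orth M"
    using S1 S2 M_AH[OF g1(1)] Morth_AH[OF g2o] by blast
qed

lemma M_reduces: "reduces S M"
  unfolding reduces_def using M_closed reduce_step by blast

end


context PSOw
begin

lemma sa_step: assumes g: "g \<in> M" and k: "k \<in> M"
  and P: "\<And>f h. (f, h) \<in> S \<Longrightarrow> f \<in> M \<Longrightarrow> h \<in> M \<Longrightarrow> l2_inner h g = l2_inner f k"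
  shows "(g, k) \<in> S"
proof -
  have gL: "g \<in> L2" and kL: "k \<in> L2" using M_L2 g k by auto
  define w where "w x = (1 / (2 * \<i>)) * (k x + \<i> * g x)" for x
  have wM: "w \<in> M" unfolding w_def[abs_def] by (intro M_scale M_add k g)
  define y where "y = Dpow (-1) w"
  have yM: "y \<in> M" unfolding y_def by (rule M_Dpow[OF wM])
  have yG: "y \<in> G0" by (rule M_G0[OF yM])
  have yL: "y \<in> L2" using M_L2[OF yM] .
  have Sy: "(AD y, AH y) \<in> S" by (rule G0_S[OF yG])
  have Dy: "Dil y = w" unfolding y_def Dil_Dpow by (simp add: Dpow_Dpow)
  have AHy: "AH y x = k x + \<i> * g x - \<i> * AD y x" for x
  proof -
    have "AH y x + \<i> * AD y x = 2 * \<i> * Dil y x" using fun_cong[OF AH_plus_iAD[of y], of x] by simp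
    also have "\<dots> = k x + \<i> * g x" unfolding Dy w_def by simp
    finally show ?thesis by (simp add: algebra_simps)
  qed
  define d where "d x = g x - AD y x" for x
  have dM: "d \<in> M" unfolding d_def[abs_def] by (intro M_diff g M_AD yM)
  have dL: "d \<in> L2" using M_L2[OF dM] .
  have kd: "(\<lambda>x. k x - AH y x) = (\<lambda>x. - \<i> * d x)" by (rule ext) (simp add: AHy d_def algebra_simps)
  have orth: "l2_inner (\<lambda>x. h x - \<i> * f x) d = 0" if fh: "(f, h) \<in> S" "f \<in> M" "h \<in> M" for f h
  proof -
    have fL: "f \<in> L2" and hL: "h \<in> L2" using M_L2 fh by auto
    have e1: "l2_inner h g = l2_inner f k" by (rule P[OF fh])
    have adjy: "(AD y, AH y) \<in> adjoint_op S" using sym Sy unfolding symmetric_op_def by blast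
    have e2: "l2_inner h (AD y) = l2_inner f (AH y)" by (rule adjD[OF adjy fh(1)])
    have "l2_inner h d = l2_inner h g - l2_inner h (AD y)"
      unfolding d_def[abs_def] by (rule ip_diff_right[OF gL AD_L2[OF yL] hL])
    also have "\<dots> = l2_inner f k - l2_inner f (AH y)" using e1 e2 by simp
    also have "\<dots> = l2_inner f (\<lambda>x. k x - AH y x)" by (rule ip_diff_right[OF kL AH_L2[OF yL] fL, symmetric])
    also have "\<dots> = \<i> * l2_inner f d" unfolding kd by (simp add: ip_scale_right)
    finally have "l2_inner h d - \<i> * l2_inner f d = 0" by simp
    then show ?thesis using ip_diff_left[OF hL L2_scale[OF fL] dL] by (simp add: ip_scale_left)
  qed
  define y' where "y' x = (1 / (2 * \<i>)) * d x" for x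
  have y'M: "y' \<in> M" unfolding y'_def[abs_def] by (intro M_scale dM)
  have y'G: "y' \<in> G0" by (rule M_G0[OF y'M])
  have dd: "(\<lambda>x. AH y' x - \<i> * AD y' x) = d"
    unfolding AH_minus_iAD by (rule ext) (simp add: y'_def)
  have "l2_inner d d = 0"
    using orth[OF G0_S[OF y'G] M_AD[OF y'M] M_AH[OF y'M]] dd by simp
  then have d0: "aeq d (\<lambda>x. 0)" by (rule ip_self_zero[OF dL])
  have e1: "aeq (AD y) g" using d0 unfolding aeq_def d_def by eventually_elim simp
  have e2: "aeq (AH y) k" using d0 unfolding aeq_def
  proof eventually_elim
    case (elim x)
    have "k x - AH y x = - \<i> * d x" using fun_cong[OF kd, of x] by simp
    then show ?case using elim by simp
  qed
  show ?thesis by (rule S_aeq[OF Sy gL kL e1 e2])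
qed

lemma M_selfadjoint: "selfadjoint_in M (S \<inter> (M \<times> M))"
  unfolding selfadjoint_in_def
proof (rule set_eqI)
  fix p :: "cfun \<times> cfun"
  obtain g k where p: "p = (g, k)" by (cases p) auto
  show "p \<in> S \<inter> M \<times> M \<longleftrightarrow> p \<in> {(g, k). g \<in> M \<and> k \<in> M \<and> (\<forall>(f, h)\<in>S \<inter> M \<times> M. l2_inner h g = l2_inner f k)}"
  proof
    assume a: "p \<in> S \<inter> M \<times> M"
    then have gk: "(g, k) \<in> adjoint_op S" using sym p unfolding symmetric_op_def by blast
    have "\<forall>(f, h)\<in>S \<inter> M \<times> M. l2_inner h g = l2_inner f k"
      using adjD[OF gk] by blast
    then show "p \<in> {(g, k). g \<in> M \<and> k \<in> M \<and> (\<forall>(f, h)\<in>S \<inter> M \<times> M. l2_inner h g = l2_inner f k)}"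
      using a p by blast
  next
    assume a: "p \<in> {(g, k). g \<in> M \<and> k \<in> M \<and> (\<forall>(f, h)\<in>S \<inter> M \<times> M. l2_inner h g = l2_inner f k)}"
    then have g: "g \<in> M" and k: "k \<in> M" and P: "\<And>f h. (f, h) \<in> S \<Longrightarrow> f \<in> M \<Longrightarrow> h \<in> M \<Longrightarrow> l2_inner h g = l2_inner f k"
      using p by auto
    have "(g, k) \<in> S" by (rule sa_step[OF g k P])
    then show "p \<in> S \<inter> M \<times> M" using p g k by blast
  qed
qed

lemma M_trivial: "f \<in> M \<Longrightarrow> aeq f (\<lambda>x. 0)"
  using simple M_reduces M_selfadjoint unfolding simple_op_def by blast

lemma E_dense: assumes gL: "g \<in> L2" and ep: "\<epsilon> > 0"
  shows "\<exists>F c. finite F \<and> F \<subseteq> UNIV \<and> l2_norm (\<lambda>x. g x - (\<Sum>p\<in>F. c p * E p x)) < \<epsilon>"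
proof -
  obtain v where v: "v \<in> spanc E" "\<forall>w\<in>spanc E. l2_inner w (\<lambda>x. g x - v x) = 0"
    using projection[OF spanc_csub[of E, OF E_L2] gL] by blast
  have vL: "v \<in> L2" using v(1) by (simp add: spanc_def)
  have rM: "(\<lambda>x. g x - v x) \<in> M"
    unfolding M_def using v(2) spanc_mem[of E, OF E_L2] L2_diff[OF gL vL] by blast
  have r0: "aeq (\<lambda>x. g x - v x) (\<lambda>x. 0)" by (rule M_trivial[OF rM])
  have va: "\<And>\<delta>. \<delta> > 0 \<Longrightarrow> \<exists>F c. finite F \<and> l2_norm (\<lambda>x. v x - (\<Sum>p\<in>F. c p * E p x)) < \<delta>"
    using v(1) unfolding spanc_def by blast
  obtain F c where F: "finite F" "l2_norm (\<lambda>x. v x - (\<Sum>p\<in>F. c p * E p x)) < \<epsilon>" using va[OF ep] by blast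
  have sL: "(\<lambda>x. \<Sum>p\<in>F. c p * E p x) \<in> L2" by (rule L2_sum, rule E_L2)
  have "aeq (\<lambda>x. g x - (\<Sum>p\<in>F. c p * E p x)) (\<lambda>x. v x - (\<Sum>p\<in>F. c p * E p x))"
    using r0 unfolding aeq_def by eventually_elim simp
  then have "l2_norm (\<lambda>x. g x - (\<Sum>p\<in>F. c p * E p x)) = l2_norm (\<lambda>x. v x - (\<Sum>p\<in>F. c p * E p x))"
    by (rule l2_norm_aeq[OF L2_diff[OF gL sL] L2_diff[OF vL sL]])
  then have X: "l2_norm (\<lambda>x. g x - (\<Sum>p\<in>F. c p * E p x)) < \<epsilon>" using F by simp
  show ?thesis using F(1) X by (intro exI[of _ F] exI[of _ c]) simp
qed

lemma E_onb: "onb_family L2 (UNIV :: (int \<times> int) set) E"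
  unfolding onb_family_def
proof (intro conjI ballI allI impI)
  fix p :: "int \<times> int" show "E p \<in> L2" by (rule E_L2)
next
  fix p p' :: "int \<times> int" show "l2_inner (E p) (E p') = (if p = p' then 1 else 0)" by (rule E_orth)
next
  fix g and \<epsilon> :: real assume "g \<in> L2" "\<epsilon> > 0"
  then show "\<exists>F c. finite F \<and> F \<subseteq> UNIV \<and> l2_norm (\<lambda>x. g x - (\<Sum>p\<in>F. c p * E p x)) < \<epsilon>"
    by (rule E_dense)
qed

end

theorem proposition6p1:
  fixes S :: "(cfun \<times> cfun) set"
    and Gm Gp :: "cfun \<Rightarrow> 'i \<Rightarrow> complex"
    and \<psi> :: cfun
  assumes "phillips_symmetric S Gm Gp"
    and "simple_op S"
    and "S \<subseteq> A_graph"
    and "\<psi> \<in> defect_space S (- \<i>)"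
    and "onb_family (defect_space S (- \<i>)) (UNIV :: int set) (\<lambda>k. Tpow k \<psi>)"
  shows "onb_family L2 (UNIV :: (int \<times> int) set) (\<lambda>(j, k). Dpow j (Tpow k \<psi>))"
proof -
  have ph: "l2_op S" "closed_op S" "densely_defined S" "symmetric_op S"
    using assms(1) unfolding phillips_symmetric_def by auto
  obtain \<Theta> where Th: "\<And>\<mu>. Im \<mu> > 0 \<Longrightarrow> is_char_fun_value S Gm Gp \<mu> \<Theta>"
    using assms(1) unfolding phillips_symmetric_def by blast
  interpret PSO S using ph assms(3) by unfold_locales auto
  have chf: "\<exists>s hm. s \<in> Domain S \<and> hm \<in> defect_space S \<mu> \<and> aeq f (\<lambda>x. s x + hm x)"
    if mu: "Im \<mu> > 0" and f: "f \<in> defect_space S \<i>" for \<mu> f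
  proof -
    let ?L = "\<lambda>\<mu>. {f \<in> L2. \<exists>g h. g \<in> Domain S \<and> h \<in> defect_space S \<mu> \<and> aeq f (\<lambda>x. g x + h x)}"
    have "?L \<mu> = ?L \<i>" using Th[OF mu] Th[of \<i>] unfolding is_char_fun_value_def by simp
    moreover have "f \<in> ?L \<i>"
    proof -
      have d0: "(\<lambda>x. 0) \<in> Domain S" using S_zero by blast
      have "\<exists>g h. g \<in> Domain S \<and> h \<in> defect_space S \<i> \<and> aeq f (\<lambda>x. g x + h x)"
        by (rule exI[of _ "\<lambda>x. 0"], rule exI[of _ f]) (simp add: d0 f)
      then show ?thesis using defect_L2[OF f] by blast
    qed
    ultimately show ?thesis by blast
  qed
  interpret PSOw S \<psi>
    by unfold_locales (use chf assms(2,5) in auto)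
  have "(\<lambda>(j, k). Dpow j (Tpow k \<psi>)) = E" by (rule ext) (auto simp: E_def)
  then show ?thesis using E_onb by simp
qed


end
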